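(* For every element $g\in G_{mn}$ there exists an integer $t_0>1$ such that for every positive integer $t$ divisible by $t_0$, the length of $g\rho_t$ in $G_{mn}(t)$ equals the length of $g$ in $G_{mn}$.
   Context: Fix integers $m,n>1$ and let $G_{mn}=\langle a,b;\ [a^m,b^n]=1\rangle$. Put $c=a^m$, $d=b^n$, $H=\langle c,d\rangle$, $A=\langle a,H\rangle$, $B=\langle b,H\rangle$; then $G_{mn}=(A*B;\ H)$. For an integer $t>1$ let $G_{mn}(t)=\langle a,b;\ [a^m,b^n]=1,\ a^{mt}=b^{nt}=1\rangle$, $\rho_t:G_{mn}\to G_{mn}(t)$ the natural homomorphism, $H(t)=H\rho_t$, $A(t)=A\rho_t$, $B(t)=B\rho_t$; then $G_{mn}(t)=(A(t)*B(t);\ H(t))$. The length of an element is the number of components of a reduced form with respect to these amalgamated free product decompositions (a reduced form is $x_1\cdots x_r$ with each $x_i$ in one free factor and, when $r>1$, consecutive components in different factors). *)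

theory Defs
  imports "HOL-Algebra.Generated_Groups"
begin

text \<open>A letter is (generator, inverted); generator False = a, True = b.\<close>
type_synonym word = "(bool \<times> bool) list"

definition inv_letter :: "bool \<times> bool \<Rightarrow> bool \<times> bool" where
  "inv_letter x = (fst x, \<not> snd x)"

definition gen_pow :: "bool \<Rightarrow> nat \<Rightarrow> word" where
  "gen_pow g k = replicate k (g, False)"

definition gen_ipow :: "bool \<Rightarrow> nat \<Rightarrow> word" where
  "gen_ipow g k = replicate k (g, True)"

inductive word_eqv :: "word set \<Rightarrow> word \<Rightarrow> word \<Rightarrow> bool" for R where
  refl: "word_eqv R w w"
| sym: "word_eqv R u v \<Longrightarrow> word_eqv R v u"
| trans: "word_eqv R u v \<Longrightarrow> word_eqv R v w \<Longrightarrow> word_eqv R u w"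
| cancel: "word_eqv R (u @ [x, inv_letter x] @ v) (u @ v)"
| relator: "r \<in> R \<Longrightarrow> word_eqv R (u @ r @ v) (u @ v)"

definition word_cls :: "word set \<Rightarrow> word \<Rightarrow> word set" where
  "word_cls R w = {v. word_eqv R v w}"

definition pres_group :: "word set \<Rightarrow> word set monoid" where
  "pres_group R =
     \<lparr> carrier = range (word_cls R),
       mult = (\<lambda>X Y. {w. \<exists>x\<in>X. \<exists>y\<in>Y. word_eqv R w (x @ y)}),
       one = word_cls R [] \<rparr>"

text \<open>Relators: [a^m, b^n] = a^-m b^-n a^m b^n, and additionally a^(mt), b^(nt).\<close>
definition rels_G :: "nat \<Rightarrow> nat \<Rightarrow> word set" where
  "rels_G m n = {gen_ipow False m @ gen_ipow True n @ gen_pow False m @ gen_pow True n}"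

definition rels_Gt :: "nat \<Rightarrow> nat \<Rightarrow> nat \<Rightarrow> word set" where
  "rels_Gt m n t = rels_G m n \<union> {gen_pow False (m * t), gen_pow True (n * t)}"

definition G_mn :: "nat \<Rightarrow> nat \<Rightarrow> word set monoid" where
  "G_mn m n = pres_group (rels_G m n)"

definition G_mnt :: "nat \<Rightarrow> nat \<Rightarrow> nat \<Rightarrow> word set monoid" where
  "G_mnt m n t = pres_group (rels_Gt m n t)"

text \<open>Subgroups H = <c,d>, A = <a,H>, B = <b,H> of a presented group with relators R
  (c = a^m, d = b^n).\<close>
definition sub_H :: "word set \<Rightarrow> nat \<Rightarrow> nat \<Rightarrow> word set set" where
  "sub_H R m n = generate (pres_group R) {word_cls R (gen_pow False m), word_cls R (gen_pow True n)}"

definition sub_A :: "word set \<Rightarrow> nat \<Rightarrow> nat \<Rightarrow> word set set" where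
  "sub_A R m n = generate (pres_group R) ({word_cls R (gen_pow False 1)} \<union> sub_H R m n)"

definition sub_B :: "word set \<Rightarrow> nat \<Rightarrow> nat \<Rightarrow> word set set" where
  "sub_B R m n = generate (pres_group R) ({word_cls R (gen_pow True 1)} \<union> sub_H R m n)"

definition rho :: "nat \<Rightarrow> nat \<Rightarrow> nat \<Rightarrow> word set \<Rightarrow> word set" where
  "rho m n t X = {w. \<exists>x\<in>X. word_eqv (rels_Gt m n t) w x}"

definition reduced_form :: "('g, 'b) monoid_scheme \<Rightarrow> 'g set \<Rightarrow> 'g set \<Rightarrow> 'g set \<Rightarrow> 'g list \<Rightarrow> bool" where
  "reduced_form G A B H xs \<longleftrightarrow>
     xs \<noteq> [] \<and> set xs \<subseteq> A \<union> B \<and>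
     (length xs > 1 \<longrightarrow>
        (\<forall>x\<in>set xs. x \<notin> H) \<and>
        (\<forall>i. Suc i < length xs \<longrightarrow>
            \<not> (xs ! i \<in> A \<and> xs ! Suc i \<in> A) \<and> \<not> (xs ! i \<in> B \<and> xs ! Suc i \<in> B)))"

definition list_prod :: "('g, 'b) monoid_scheme \<Rightarrow> 'g list \<Rightarrow> 'g" where
  "list_prod G xs = foldr (\<lambda>x y. x \<otimes>\<^bsub>G\<^esub> y) xs \<one>\<^bsub>G\<^esub>"

text \<open>Length = number of components of a reduced form (well defined by the normal form
  theorem; we take the least, which then is the common value).\<close>
definition amal_length :: "('g, 'b) monoid_scheme \<Rightarrow> 'g set \<Rightarrow> 'g set \<Rightarrow> 'g set \<Rightarrow> 'g \<Rightarrow> nat" where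
  "amal_length G A B H g = (LEAST r. \<exists>xs. reduced_form G A B H xs \<and> length xs = r \<and> list_prod G xs = g)"

end

theory Submission
  imports Defs
begin

lemma weqv_app_left: "word_eqv R u v \<Longrightarrow> word_eqv R (x @ u) (x @ v)"
proof (induction rule: word_eqv.induct)
  case (cancel u y v) thus ?case using word_eqv.cancel[of R "x@u" y v] by simp
next
  case (relator r u v) thus ?case using word_eqv.relator[of r R "x@u" v] by simp
qed (auto intro: word_eqv.intros)

lemma weqv_app_right: "word_eqv R u v \<Longrightarrow> word_eqv R (u @ y) (v @ y)"
proof (induction rule: word_eqv.induct)
  case (cancel u x v) thus ?case using word_eqv.cancel[of R u x "v@y"] by simp
next
  case (relator r u v) thus ?case using word_eqv.relator[of r R u "v@y"] by simp
qed (auto intro: word_eqv.intros)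

lemma weqv_app: "word_eqv R u v \<Longrightarrow> word_eqv R x y \<Longrightarrow> word_eqv R (u @ x) (v @ y)"
  by (meson weqv_app_left weqv_app_right word_eqv.trans)

definition invw :: "word \<Rightarrow> word" where
  "invw w = rev (map inv_letter w)"

lemma inv_letter_inv[simp]: "inv_letter (inv_letter x) = x"
  by (simp add: inv_letter_def)

lemma invw_simps[simp]: "invw [] = []" "invw (x # w) = invw w @ [inv_letter x]"
  "invw (u @ v) = invw v @ invw u" "invw (invw w) = w"
  by (auto simp: invw_def rev_map comp_def)

lemma weqv_cancel1: "word_eqv R ([x, inv_letter x]) []"
  using word_eqv.cancel[of R "[]" x "[]"] by simp

lemma weqv_invw_l: "word_eqv R (invw w @ w) []"
proof (induction w)
  case Nil thus ?case by (simp add: word_eqv.refl)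
next
  case (Cons x w)
  have "word_eqv R (invw w @ [inv_letter x] @ [x] @ w) (invw w @ w)"
    using word_eqv.cancel[of R "invw w" "inv_letter x" w] by simp
  thus ?case using Cons word_eqv.trans by fastforce
qed

lemma weqv_invw_r: "word_eqv R (w @ invw w) []"
  using weqv_invw_l[of R "invw w"] by simp

lemma cls_eq_iff: "word_cls R u = word_cls R v \<longleftrightarrow> word_eqv R u v"
proof
  assume "word_cls R u = word_cls R v"
  moreover have "u \<in> word_cls R u" by (simp add: word_cls_def word_eqv.refl)
  ultimately show "word_eqv R u v" by (simp add: word_cls_def)
next
  assume h: "word_eqv R u v"
  show "word_cls R u = word_cls R v" unfolding word_cls_def
    using h word_eqv.sym word_eqv.trans by blast
qed

lemma pres_mult: "word_cls R u \<otimes>\<^bsub>pres_group R\<^esub> word_cls R v = word_cls R (u @ v)"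
proof -
  have "{w. \<exists>x\<in>word_cls R u. \<exists>y\<in>word_cls R v. word_eqv R w (x @ y)} = word_cls R (u @ v)"
  proof (intro equalityI subsetI)
    fix w assume "w \<in> {w. \<exists>x\<in>word_cls R u. \<exists>y\<in>word_cls R v. word_eqv R w (x @ y)}"
    then obtain x y where "word_eqv R x u" "word_eqv R y v" "word_eqv R w (x @ y)"
      by (auto simp: word_cls_def)
    thus "w \<in> word_cls R (u @ v)" unfolding word_cls_def
      using weqv_app word_eqv.trans by blast
  next
    fix w assume "w \<in> word_cls R (u @ v)"
    thus "w \<in> {w. \<exists>x\<in>word_cls R u. \<exists>y\<in>word_cls R v. word_eqv R w (x @ y)}"
      by (auto simp: word_cls_def intro: word_eqv.refl)
  qed
  thus ?thesis by (simp add: pres_group_def)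
qed

lemma pres_one: "\<one>\<^bsub>pres_group R\<^esub> = word_cls R []"
  by (simp add: pres_group_def)

lemma pres_carrier: "carrier (pres_group R) = range (word_cls R)"
  by (simp add: pres_group_def)

lemma pres_group_is_group: "group (pres_group R)"
proof (rule groupI)
  fix x y assume "x \<in> carrier (pres_group R)" "y \<in> carrier (pres_group R)"
  thus "x \<otimes>\<^bsub>pres_group R\<^esub> y \<in> carrier (pres_group R)"
    by (auto simp: pres_carrier pres_mult)
next
  show "\<one>\<^bsub>pres_group R\<^esub> \<in> carrier (pres_group R)" by (simp add: pres_carrier pres_one)
next
  fix x y z assume "x \<in> carrier (pres_group R)" "y \<in> carrier (pres_group R)" "z \<in> carrier (pres_group R)"
  thus "x \<otimes>\<^bsub>pres_group R\<^esub> y \<otimes>\<^bsub>pres_group R\<^esub> z = x \<otimes>\<^bsub>pres_group R\<^esub> (y \<otimes>\<^bsub>pres_group R\<^esub> z)"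
    by (auto simp: pres_carrier pres_mult)
next
  fix x assume "x \<in> carrier (pres_group R)"
  thus "\<one>\<^bsub>pres_group R\<^esub> \<otimes>\<^bsub>pres_group R\<^esub> x = x"
    by (auto simp: pres_carrier pres_mult pres_one)
next
  fix x assume "x \<in> carrier (pres_group R)"
  then obtain w where w: "x = word_cls R w" by (auto simp: pres_carrier)
  show "\<exists>y\<in>carrier (pres_group R). y \<otimes>\<^bsub>pres_group R\<^esub> x = \<one>\<^bsub>pres_group R\<^esub>"
    by (rule bexI[of _ "word_cls R (invw w)"])
       (auto simp: w pres_mult pres_one pres_carrier cls_eq_iff weqv_invw_l)
qed

lemma pres_inv: "inv\<^bsub>pres_group R\<^esub> (word_cls R w) = word_cls R (invw w)"
proof -
  interpret group "pres_group R" by (rule pres_group_is_group)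
  show ?thesis
    by (rule inv_equality) (auto simp: pres_mult pres_one pres_carrier cls_eq_iff weqv_invw_l)
qed

inductive_set wordsof :: "word set \<Rightarrow> word set" for P where
  nil: "[] \<in> wordsof P"
| cons: "p \<in> P \<Longrightarrow> w \<in> wordsof P \<Longrightarrow> p @ w \<in> wordsof P"

lemma wordsof_app: "u \<in> wordsof P \<Longrightarrow> v \<in> wordsof P \<Longrightarrow> u @ v \<in> wordsof P"
  by (induction rule: wordsof.induct) (auto intro: wordsof.intros)

lemma wordsof_piece: "p \<in> P \<Longrightarrow> p \<in> wordsof P"
  using wordsof.cons[of p P "[]"] wordsof.nil by simp

lemma wordsof_invw: assumes "\<And>p. p \<in> P \<Longrightarrow> invw p \<in> wordsof P" "w \<in> wordsof P" shows "invw w \<in> wordsof P"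
  using assms(2) assms(1) by (induction rule: wordsof.induct) (auto intro: wordsof.intros wordsof_app)

lemma wordsof_mono: assumes "P \<subseteq> Q" "w \<in> wordsof P" shows "w \<in> wordsof Q"
  using assms(2) assms(1) by (induction rule: wordsof.induct) (auto intro: wordsof.intros)

lemma cls_wordsof_sub_generate:
  assumes "\<And>p. p \<in> P \<Longrightarrow> word_cls R p \<in> generate (pres_group R) X"
  shows "w \<in> wordsof P \<Longrightarrow> word_cls R w \<in> generate (pres_group R) X"
proof (induction rule: wordsof.induct)
  case nil thus ?case using generate.one[of "pres_group R" X] by (simp add: pres_one)
next
  case (cons p w) thus ?case using generate.eng[OF assms[of p] cons(3)] by (simp add: pres_mult)
qed

lemma generate_sub_cls_wordsof:
  assumes "X \<subseteq> word_cls R ` wordsof P" and "\<And>p. p \<in> P \<Longrightarrow> invw p \<in> wordsof P"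
  shows "x \<in> generate (pres_group R) X \<Longrightarrow> x \<in> word_cls R ` wordsof P"
proof (induction rule: generate.induct)
  case one thus ?case by (auto simp: pres_one intro: wordsof.nil)
next
  case (incl h) thus ?case using assms(1) by auto
next
  case (inv h)
  then obtain w where "w \<in> wordsof P" "h = word_cls R w" using assms(1) by auto
  thus ?case using wordsof_invw[OF assms(2)] by (auto simp: pres_inv)
next
  case (eng h1 h2) thus ?case by (auto simp: pres_mult intro: wordsof_app)
qed


datatype syl = SA nat | SB nat | SC int | SD int

type_synonym nf = "int \<times> int \<times> syl list"

definition md :: "nat \<Rightarrow> int \<Rightarrow> int" where "md N e = e mod int N"

lemma md_md[simp]: "md N (md N e) = md N e" by (simp add: md_def)
lemma md_add_md[simp]: "md N (md N a + b) = md N (a + b)" "md N (b + md N a) = md N (b + a)"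
  by (simp_all add: md_def mod_add_left_eq mod_add_right_eq)
lemma md_diff_md[simp]: "md N (md N a - b) = md N (a - b)"
  by (simp add: md_def mod_diff_left_eq)
lemma md_0[simp]: "md N 0 = 0" by (simp add: md_def)
lemma md_N[simp]: "md N (a + int N * q) = md N a" by (simp add: md_def)

fun peelA :: "nf \<Rightarrow> int \<times> nat \<times> syl list" where
  "peelA (i, j, S) = (if j \<noteq> 0 then (i, 0, SD j # S)
      else (case S of SA e # S' \<Rightarrow> (i, e, S') | _ \<Rightarrow> (i, 0, S)))"

fun mkA :: "int \<Rightarrow> nat \<Rightarrow> syl list \<Rightarrow> nf" where
  "mkA i e R = (if e = 0 then (case R of SD j # R' \<Rightarrow> (i, j, R') | _ \<Rightarrow> (i, 0, R))
      else (i, 0, SA e # R))"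

definition consA :: "nat \<Rightarrow> nat \<Rightarrow> int \<Rightarrow> nf \<Rightarrow> nf" where
  "consA m N k p = (case peelA p of (i, e, R) \<Rightarrow>
      mkA (md N (i + (k + int e) div int m)) (nat ((k + int e) mod int m)) R)"

fun swS :: "syl \<Rightarrow> syl" where
  "swS (SA e) = SB e" | "swS (SB e) = SA e" | "swS (SC e) = SD e" | "swS (SD e) = SC e"

lemma swS_swS[simp]: "swS (swS x) = x" by (cases x) auto

fun swp :: "nf \<Rightarrow> nf" where "swp (i, j, S) = (j, i, map swS S)"

lemma swp_swp[simp]: "swp (swp p) = p" by (cases p) (auto simp: comp_def)

definition consB :: "nat \<Rightarrow> nat \<Rightarrow> int \<Rightarrow> nf \<Rightarrow> nf" where
  "consB n N k p = swp (consA n N k (swp p))"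

fun vsyl :: "nat \<Rightarrow> nat \<Rightarrow> nat \<Rightarrow> syl \<Rightarrow> bool" where
  "vsyl m n N (SA e) = (0 < e \<and> e < m)"
| "vsyl m n N (SB e) = (0 < e \<and> e < n)"
| "vsyl m n N (SC e) = (e \<noteq> 0 \<and> md N e = e)"
| "vsyl m n N (SD e) = (e \<noteq> 0 \<and> md N e = e)"

fun adj :: "syl \<Rightarrow> syl \<Rightarrow> bool" where
  "adj (SA _) (SD _) = True" | "adj (SA _) (SB _) = True"
| "adj (SD _) (SA _) = True" | "adj (SD _) (SB _) = True"
| "adj (SB _) (SC _) = True" | "adj (SB _) (SA _) = True"
| "adj (SC _) (SB _) = True" | "adj (SC _) (SA _) = True"
| "adj _ _ = False"

fun startok :: "syl list \<Rightarrow> bool" where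
  "startok [] = True" | "startok (SA _ # _) = True" | "startok (SB _ # _) = True"
| "startok _ = False"

definition vlist :: "nat \<Rightarrow> nat \<Rightarrow> nat \<Rightarrow> syl list \<Rightarrow> bool" where
  "vlist m n N S = ((\<forall>x\<in>set S. vsyl m n N x) \<and> successively adj S)"

fun valid :: "nat \<Rightarrow> nat \<Rightarrow> nat \<Rightarrow> nf \<Rightarrow> bool" where
  "valid m n N (i, j, S) = (md N i = i \<and> md N j = j \<and> vlist m n N S \<and> startok S)"

lemma vlist_simps[simp]: "vlist m n N []"
  "vlist m n N (x # S) = (vsyl m n N x \<and> vlist m n N S \<and> (case S of [] \<Rightarrow> True | y # _ \<Rightarrow> adj x y))"
  by (auto simp: vlist_def split: list.split)

lemma vlist_Cons: "vlist m n N (x # S) \<Longrightarrow> vlist m n N S"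
  by (cases S) auto

fun notAC :: "syl list \<Rightarrow> bool" where
  "notAC (SA _ # _) = False" | "notAC (SC _ # _) = False" | "notAC _ = True"

fun pvA :: "nat \<Rightarrow> nat \<Rightarrow> nat \<Rightarrow> int \<times> nat \<times> syl list \<Rightarrow> bool" where
  "pvA m n N (i, e, R) = (md N i = i \<and> e < m \<and> vlist m n N R \<and> notAC R)"

lemma peelA_valid: "0 < m \<Longrightarrow> valid m n N p \<Longrightarrow> pvA m n N (peelA p)"
proof (cases p)
  case (fields i j S)
  assume v: "valid m n N p" and m: "0 < m"
  show ?thesis
  proof (cases "j = 0")
    case False thus ?thesis using v fields m
      by (cases S rule: startok.cases) auto
  next
    case True thus ?thesis using v fields
    proof (cases S rule: startok.cases)
      case (2 e S') thus ?thesis using v fields True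
        by (cases S' rule: notAC.cases) auto
    qed (use m in auto)
  qed
qed

lemma mk_peelA: "valid m n N p \<Longrightarrow> (case peelA p of (i, e, R) \<Rightarrow> mkA i e R) = p"
proof (cases p)
  case (fields i j S)
  assume v: "valid m n N p"
  show ?thesis
  proof (cases "j = 0")
    case False thus ?thesis using v fields by auto
  next
    case True thus ?thesis using v fields
    proof (cases S rule: startok.cases)
      case (2 e S') thus ?thesis using v fields True by auto
    next
      case (3 f S') thus ?thesis using v fields True by auto
    qed auto
  qed
qed

lemma mk_peelA_i: "valid m n N (i, j, S) \<Longrightarrow> (case peelA (i, j, S) of (_, e, R) \<Rightarrow> mkA i' e R) = (i', j, S)"
proof (cases "j = 0")
  case False thus ?thesis by auto
next
  case True assume v: "valid m n N (i, j, S)"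
  thus ?thesis using True
  proof (cases S rule: startok.cases)
    case (2 e S') thus ?thesis using v True by auto
  next
    case (3 f S') thus ?thesis using v True by auto
  qed auto
qed

lemma peelA_i: "fst (peelA (i, j, S)) = i"
  by (auto split: list.split syl.split)

lemma peel_mkA: "pvA m n N (i, e, R) \<Longrightarrow> peelA (mkA i e R) = (i, e, R)"
proof (cases "e = 0")
  case True assume v: "pvA m n N (i, e, R)"
  thus ?thesis using True
    by (cases R rule: notAC.cases) (auto simp: vlist_def)
next
  case False thus ?thesis by auto
qed

lemma mkA_valid: "pvA m n N (i, e, R) \<Longrightarrow> valid m n N (mkA i e R)"
proof (cases R)
  case Nil assume "pvA m n N (i, e, R)" thus ?thesis using Nil by auto
next
  case (Cons x R') assume v: "pvA m n N (i, e, R)"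
  show ?thesis
  proof (cases x)
    case (SD j) thus ?thesis using v Cons
      by (cases R' rule: startok.cases) (auto split: list.splits)
  qed (use v Cons in \<open>auto split: list.splits\<close>)
qed


declare mkA.simps[simp del] peelA.simps[simp del]

lemma divmod_arith:
  fixes k l e m :: int assumes "0 < m"
  shows "(l + e) div m + (k + (l + e) mod m) div m = (k + l + e) div m"
    and "(k + (l + e) mod m) mod m = (k + l + e) mod m"
proof -
  have "k + l + e = m * ((l + e) div m) + (k + (l + e) mod m)"
    by (metis add.commute add.left_commute div_mult_mod_eq mult.commute)
  then show "(l + e) div m + (k + (l + e) mod m) div m = (k + l + e) div m"
    using assms by (metis add.commute div_mult_self2 less_irrefl mult.commute)
  show "(k + (l + e) mod m) mod m = (k + l + e) mod m"
    by (metis add.assoc mod_add_right_eq)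
qed

lemma consA_valid:
  assumes "0 < m" "valid m n N p" shows "valid m n N (consA m N k p)"
proof -
  obtain i e R where pe: "peelA p = (i, e, R)" by (cases "peelA p") auto
  have "pvA m n N (i, e, R)" using peelA_valid[OF assms] pe by simp
  hence "pvA m n N (md N (i + (k + int e) div int m), nat ((k + int e) mod int m), R)"
    using assms(1) by (auto simp: nat_less_iff)
  thus ?thesis unfolding consA_def pe by (auto intro: mkA_valid)
qed

lemma consA_consA:
  assumes "0 < m" "valid m n N p" shows "consA m N k (consA m N l p) = consA m N (k + l) p"
proof -
  obtain i e R where pe: "peelA p = (i, e, R)" by (cases "peelA p") auto
  have pv: "pvA m n N (i, e, R)" using peelA_valid[OF assms] pe by simp
  define i1 where "i1 = md N (i + (l + int e) div int m)"
  define e1 where "e1 = nat ((l + int e) mod int m)"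
  have pv1: "pvA m n N (i1, e1, R)" using pv assms(1) by (auto simp: i1_def e1_def nat_less_iff)
  have e1i: "int e1 = (l + int e) mod int m" using assms(1) by (simp add: e1_def)
  have "consA m N l p = mkA i1 e1 R" by (simp add: consA_def pe i1_def e1_def)
  hence "consA m N k (consA m N l p) = mkA (md N (i1 + (k + int e1) div int m)) (nat ((k + int e1) mod int m)) R"
    by (simp add: consA_def peel_mkA[OF pv1])
  also have "\<dots> = mkA (md N (i + (k + l + int e) div int m)) (nat ((k + l + int e) mod int m)) R"
  proof -
    have h1: "(l + int e) div int m + (k + (l + int e) mod int m) div int m = (k + l + int e) div int m"
      and h2: "(k + (l + int e) mod int m) mod int m = (k + l + int e) mod int m"
      using divmod_arith[where k=k and l=l and e="int e" and m="int m"] assms(1) by simp_all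
    have "md N (i1 + (k + int e1) div int m) = md N (i + (k + l + int e) div int m)"
      unfolding i1_def e1i by (metis md_add_md(1) add.assoc h1)
    moreover have "nat ((k + int e1) mod int m) = nat ((k + l + int e) mod int m)"
      unfolding e1i h2 ..
    ultimately show ?thesis by simp
  qed
  also have "\<dots> = consA m N (k + l) p" by (simp add: consA_def pe add.assoc)
  finally show ?thesis .
qed

lemma consA_0:
  assumes "0 < m" "valid m n N p" shows "consA m N 0 p = p"
proof -
  obtain i e R where pe: "peelA p = (i, e, R)" by (cases "peelA p") auto
  have pv: "pvA m n N (i, e, R)" using peelA_valid[OF assms] pe by simp
  hence "consA m N 0 p = mkA i e R" by (simp add: consA_def pe)
  thus ?thesis using mk_peelA[OF assms(2)] pe by simp
qed

lemma consA_mq: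
  assumes "0 < m" "valid m n N (i, j, S)"
  shows "consA m N (int m * q) (i, j, S) = (md N (i + q), j, S)"
proof -
  obtain i0 e R where pe: "peelA (i, j, S) = (i0, e, R)" by (cases "peelA (i, j, S)") auto
  have i0: "i0 = i" using peelA_i[of i j S] pe by simp
  have pv: "pvA m n N (i0, e, R)" using peelA_valid[OF assms] pe by simp
  hence "(int m * q + int e) div int m = q" "(int m * q + int e) mod int m = int e"
    using assms(1) by auto
  hence "consA m N (int m * q) (i, j, S) = mkA (md N (i + q)) e R"
    by (simp add: consA_def pe i0)
  thus ?thesis using mk_peelA_i[OF assms(2), of "md N (i + q)"] pe by simp
qed

lemma vsyl_swS[simp]: "vsyl n m N (swS x) = vsyl m n N x" by (cases x) auto
lemma adj_swS[simp]: "adj (swS x) (swS y) = adj x y" by (cases x; cases y) auto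
lemma startok_swS[simp]: "startok (map swS S) = startok S"
  by (cases S rule: startok.cases) auto
lemma vlist_swS[simp]: "vlist n m N (map swS S) = vlist m n N S"
  by (induction S) (auto split: list.split)
lemma valid_swp[simp]: "valid n m N (swp p) = valid m n N p"
  by (cases p) auto

lemma consB_valid:
  assumes "0 < n" "valid m n N p" shows "valid m n N (consB n N k p)"
  using consA_valid[of n m N "swp p" k] assms unfolding consB_def
  by (metis swp_swp valid_swp)

lemma consB_consB:
  assumes "0 < n" "valid m n N p" shows "consB n N k (consB n N l p) = consB n N (k + l) p"
  using consA_consA[of n m N "swp p" k l] assms by (simp add: consB_def)

lemma consB_0:
  assumes "0 < n" "valid m n N p" shows "consB n N 0 p = p"
  using consA_0[of n m N "swp p"] assms by (simp add: consB_def)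

lemma consB_nq:
  assumes "0 < n" "valid m n N (i, j, S)"
  shows "consB n N (int n * q) (i, j, S) = (i, md N (j + q), S)"
  using consA_mq[of n m N j i "map swS S" q] assms by (simp add: consB_def comp_def)

definition act_letter :: "nat \<Rightarrow> nat \<Rightarrow> nat \<Rightarrow> bool \<times> bool \<Rightarrow> nf \<Rightarrow> nf" where
  "act_letter m n N x = (if fst x then consB n N (if snd x then -1 else 1)
                          else consA m N (if snd x then -1 else 1))"

definition act :: "nat \<Rightarrow> nat \<Rightarrow> nat \<Rightarrow> word \<Rightarrow> nf \<Rightarrow> nf" where
  "act m n N w p = foldr (act_letter m n N) w p"

lemma act_simps[simp]: "act m n N [] p = p" "act m n N (x # w) p = act_letter m n N x (act m n N w p)"
  "act m n N (u @ v) p = act m n N u (act m n N v p)"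
  by (simp_all add: act_def)

lemma act_letter_valid: "0 < m \<Longrightarrow> 0 < n \<Longrightarrow> valid m n N p \<Longrightarrow> valid m n N (act_letter m n N x p)"
  by (auto simp: act_letter_def intro: consA_valid consB_valid)

lemma act_valid: "0 < m \<Longrightarrow> 0 < n \<Longrightarrow> valid m n N p \<Longrightarrow> valid m n N (act m n N w p)"
  by (induction w) (auto intro: act_letter_valid)

lemma act_gen_pow_A: "0 < m \<Longrightarrow> valid m n N p \<Longrightarrow> act m n N (gen_pow False k) p = consA m N (int k) p"
proof (induction k)
  case 0 thus ?case by (simp add: gen_pow_def consA_0)
next
  case (Suc k)
  have "act m n N (gen_pow False (Suc k)) p = consA m N 1 (consA m N (int k) p)"
    using Suc by (simp add: gen_pow_def act_letter_def)
  thus ?case using consA_consA[OF Suc(2,3)] by (simp add: add.commute)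
qed

lemma act_gen_ipow_A: "0 < m \<Longrightarrow> valid m n N p \<Longrightarrow> act m n N (gen_ipow False k) p = consA m N (- int k) p"
proof (induction k)
  case 0 thus ?case by (simp add: gen_ipow_def consA_0)
next
  case (Suc k)
  have "act m n N (gen_ipow False (Suc k)) p = consA m N (-1) (consA m N (- int k) p)"
    using Suc by (simp add: gen_ipow_def act_letter_def)
  thus ?case using consA_consA[OF Suc(2,3)] by simp
qed

lemma act_gen_pow_B: "0 < n \<Longrightarrow> valid m n N p \<Longrightarrow> act m n N (gen_pow True k) p = consB n N (int k) p"
proof (induction k)
  case 0 thus ?case by (simp add: gen_pow_def consB_0)
next
  case (Suc k)
  have "act m n N (gen_pow True (Suc k)) p = consB n N 1 (consB n N (int k) p)"
    using Suc by (simp add: gen_pow_def act_letter_def)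
  thus ?case using consB_consB[OF Suc(2,3)] by (simp add: add.commute)
qed

lemma act_gen_ipow_B: "0 < n \<Longrightarrow> valid m n N p \<Longrightarrow> act m n N (gen_ipow True k) p = consB n N (- int k) p"
proof (induction k)
  case 0 thus ?case by (simp add: gen_ipow_def consB_0)
next
  case (Suc k)
  have "act m n N (gen_ipow True (Suc k)) p = consB n N (-1) (consB n N (- int k) p)"
    using Suc by (simp add: gen_ipow_def act_letter_def)
  thus ?case using consB_consB[OF Suc(2,3)] by simp
qed

definition relsN :: "nat \<Rightarrow> nat \<Rightarrow> nat \<Rightarrow> word set" where
  "relsN m n N = (if N = 0 then rels_G m n else rels_Gt m n N)"

lemma act_rel:
  assumes mn: "0 < m" "0 < n" and r: "r \<in> relsN m n N" and v: "valid m n N p"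
  shows "act m n N r p = p"
proof -
  obtain i j S where p: "p = (i, j, S)" by (cases p) auto
  have vi: "md N i = i" "md N j = j" using v p by auto
  have A: "act m n N (gen_ipow False m @ gen_ipow True n @ gen_pow False m @ gen_pow True n) p = p"
  proof -
    have v1: "valid m n N (i, md N (j + 1), S)" using v p consB_valid[OF mn(2) v, of "int n * 1"]
      consB_nq[OF mn(2), of m N i j S 1] by simp
    have v2: "valid m n N (md N (i + 1), md N (j + 1), S)"
      using consA_valid[OF mn(1) v1, of "int m * 1"] consA_mq[OF mn(1) v1, of 1] by simp
    have v3: "valid m n N (md N (i + 1), md N (md N (j + 1) + - 1), S)"
      using consB_valid[OF mn(2) v2, of "int n * (-1)"] consB_nq[OF mn(2) v2, of "-1"] by simp
    have "act m n N (gen_ipow False m @ gen_ipow True n @ gen_pow False m @ gen_pow True n) p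
       = consA m N (- int m) (consB n N (- int n) (consA m N (int m) (consB n N (int n) p)))"
      using v mn by (simp add: act_gen_pow_A act_gen_pow_B act_gen_ipow_A act_gen_ipow_B
          act_valid consA_valid consB_valid)
    also have "consB n N (int n) p = (i, md N (j + 1), S)"
      using consB_nq[OF mn(2), of m N i j S 1] v p by simp
    also have "consA m N (int m) (i, md N (j + 1), S) = (md N (i + 1), md N (j + 1), S)"
      using consA_mq[OF mn(1) v1, of 1] by simp
    also have "consB n N (- int n) (md N (i + 1), md N (j + 1), S) = (md N (i + 1), md N (md N (j + 1) + - 1), S)"
      using consB_nq[OF mn(2) v2, of "-1"] by simp
    also have "consA m N (- int m) (md N (i + 1), md N (md N (j + 1) + - 1), S) = (md N (md N (i + 1) + - 1), md N (md N (j + 1) + - 1), S)"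
      using consA_mq[OF mn(1) v3, of "-1"] by simp
    also have "\<dots> = p" using vi p by simp
    finally show ?thesis .
  qed
  show ?thesis
  proof (cases "r \<in> rels_G m n")
    case True thus ?thesis using A by (simp add: rels_G_def)
  next
    case False
    hence N: "N \<noteq> 0" and r2: "r = gen_pow False (m * N) \<or> r = gen_pow True (n * N)"
      using r by (auto simp: relsN_def rels_Gt_def split: if_splits)
    show ?thesis using r2
    proof
      assume "r = gen_pow False (m * N)"
      hence "act m n N r p = consA m N (int m * int N) (i, j, S)"
        using act_gen_pow_A[OF mn(1) v] p by simp
      also have "\<dots> = (md N (i + int N), j, S)" using consA_mq[OF mn(1)] v p by simp
      also have "\<dots> = p" using vi p md_N[of N i 1] by simp
      finally show ?thesis .
    next
      assume "r = gen_pow True (n * N)"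
      hence "act m n N r p = consB n N (int n * int N) (i, j, S)"
        using act_gen_pow_B[OF mn(2) v] p by simp
      also have "\<dots> = (i, md N (j + int N), S)" using consB_nq[OF mn(2)] v p by simp
      also have "\<dots> = p" using vi p md_N[of N j 1] by simp
      finally show ?thesis .
    qed
  qed
qed

lemma act_cancel:
  assumes mn: "0 < m" "0 < n" and v: "valid m n N p"
  shows "act_letter m n N x (act_letter m n N (inv_letter x) p) = p"
  using assms consA_consA[OF mn(1) v] consB_consB[OF mn(2) v] consA_0[OF mn(1) v] consB_0[OF mn(2) v]
  by (auto simp: act_letter_def inv_letter_def)

lemma act_eqv:
  assumes mn: "0 < m" "0 < n" and e: "word_eqv (relsN m n N) u v"
  shows "valid m n N p \<Longrightarrow> act m n N u p = act m n N v p"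
  using e
proof (induction arbitrary: p rule: word_eqv.induct)
  case (cancel u x v)
  thus ?case using act_cancel[OF mn act_valid[OF mn cancel]] by simp
next
  case (relator r u v)
  thus ?case using act_rel[OF mn relator(1) act_valid[OF mn relator(2)]] by simp
qed auto


declare mkA.simps[simp del] peelA.simps[simp del]

context group
begin

lemma commute_int_pow1:
  assumes x: "x \<in> carrier G" and y: "y \<in> carrier G" and c: "x \<otimes> y = y \<otimes> x"
  shows "x [^] (i::int) \<otimes> y = y \<otimes> x [^] i"
proof -
  have ix: "inv x \<otimes> y = y \<otimes> inv x"
  proof -
    have "inv x \<otimes> y = inv x \<otimes> (y \<otimes> x) \<otimes> inv x" using x y by (simp add: m_assoc)
    also have "\<dots> = inv x \<otimes> (x \<otimes> y) \<otimes> inv x" using c by simp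
    also have "\<dots> = y \<otimes> inv x" using x y by (simp add: m_assoc[symmetric])
    finally show ?thesis .
  qed
  show ?thesis
  proof (cases "i < 0")
    case True
    then obtain k where k: "i = - int k" by (metis less_le neg_int_cases)
    hence "x [^] i = inv x [^] k" using x by (simp add: int_pow_neg_int nat_pow_inv)
    thus ?thesis using group_commutes_pow[OF ix] x y by simp
  next
    case False
    then obtain k where k: "i = int k" by (metis nonneg_int_cases not_less)
    hence "x [^] i = x [^] k" by (simp add: int_pow_int)
    thus ?thesis using group_commutes_pow[OF c x y] by simp
  qed
qed

lemma commute_int_pow:
  assumes "x \<in> carrier G" "y \<in> carrier G" "x \<otimes> y = y \<otimes> x"
  shows "x [^] (i::int) \<otimes> y [^] (j::int) = y [^] j \<otimes> x [^] i"
proof -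
  have "y [^] j \<otimes> x = x \<otimes> y [^] j" using commute_int_pow1[OF assms(2,1) assms(3)[symmetric]] by simp
  from commute_int_pow1[OF assms(1) _ this[symmetric]] show ?thesis using assms by simp
qed

fun Psi1 :: "'a \<Rightarrow> 'a \<Rightarrow> nat \<Rightarrow> nat \<Rightarrow> syl \<Rightarrow> 'a" where
  "Psi1 g1 g2 M1 M2 (SA e) = g1 [^] (int e)"
| "Psi1 g1 g2 M1 M2 (SB e) = g2 [^] (int e)"
| "Psi1 g1 g2 M1 M2 (SC e) = g1 [^] (int M1 * e)"
| "Psi1 g1 g2 M1 M2 (SD e) = g2 [^] (int M2 * e)"

definition PsiS :: "'a \<Rightarrow> 'a \<Rightarrow> nat \<Rightarrow> nat \<Rightarrow> syl list \<Rightarrow> 'a" where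
  "PsiS g1 g2 M1 M2 S = foldr (\<lambda>s acc. Psi1 g1 g2 M1 M2 s \<otimes> acc) S \<one>"

fun Psi :: "'a \<Rightarrow> 'a \<Rightarrow> nat \<Rightarrow> nat \<Rightarrow> nf \<Rightarrow> 'a" where
  "Psi g1 g2 M1 M2 (i, j, S) = g1 [^] (int M1 * i) \<otimes> (g2 [^] (int M2 * j) \<otimes> PsiS g1 g2 M1 M2 S)"

lemma PsiS_simps[simp]: "PsiS g1 g2 M1 M2 [] = \<one>"
  "PsiS g1 g2 M1 M2 (s # S) = Psi1 g1 g2 M1 M2 s \<otimes> PsiS g1 g2 M1 M2 S"
  by (simp_all add: PsiS_def)

lemma Psi1_closed[simp]: "g1 \<in> carrier G \<Longrightarrow> g2 \<in> carrier G \<Longrightarrow> Psi1 g1 g2 M1 M2 s \<in> carrier G"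
  by (cases s) auto

lemma PsiS_closed[simp]: "g1 \<in> carrier G \<Longrightarrow> g2 \<in> carrier G \<Longrightarrow> PsiS g1 g2 M1 M2 S \<in> carrier G"
  by (induction S) auto

lemma Psi_closed[simp]: "g1 \<in> carrier G \<Longrightarrow> g2 \<in> carrier G \<Longrightarrow> Psi g1 g2 M1 M2 p \<in> carrier G"
  by (cases p) auto

lemma PsiS_append: "g1 \<in> carrier G \<Longrightarrow> g2 \<in> carrier G \<Longrightarrow>
   PsiS g1 g2 M1 M2 (S @ T) = PsiS g1 g2 M1 M2 S \<otimes> PsiS g1 g2 M1 M2 T"
  by (induction S) (auto simp: m_assoc)

lemma Psi1_swS: "Psi1 g1 g2 M1 M2 (swS s) = Psi1 g2 g1 M2 M1 s"
  by (cases s) auto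

lemma PsiS_swS: "PsiS g1 g2 M1 M2 (map swS S) = PsiS g2 g1 M2 M1 S"
  by (induction S) (auto simp: Psi1_swS)

lemma Psi_swp:
  assumes "g1 \<in> carrier G" "g2 \<in> carrier G" "g1 [^] (int M1) \<otimes> g2 [^] (int M2) = g2 [^] (int M2) \<otimes> g1 [^] (int M1)"
  shows "Psi g1 g2 M1 M2 (swp q) = Psi g2 g1 M2 M1 q"
proof -
  obtain i j S where q: "q = (i, j, S)" by (cases q) auto
  have "g1 [^] (int M1 * j) \<otimes> g2 [^] (int M2 * i) = g2 [^] (int M2 * i) \<otimes> g1 [^] (int M1 * j)"
    using commute_int_pow[of "g1 [^] (int M1)" "g2 [^] (int M2)" j i] assms
    by (simp add: int_pow_pow)
  thus ?thesis using assms
    by (simp add: q PsiS_swS m_assoc[symmetric])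
qed

lemma Psi_peelA:
  assumes g: "g1 \<in> carrier G" "g2 \<in> carrier G" and v: "valid M1 M2 N p" and pe: "peelA p = (i, e, R)"
  shows "Psi g1 g2 M1 M2 p = g1 [^] (int M1 * i + int e) \<otimes> PsiS g1 g2 M1 M2 R"
proof -
  obtain i0 j S where p: "p = (i0, j, S)" by (cases p) auto
  show ?thesis
  proof (cases "j = 0")
    case False thus ?thesis using pe g by (auto simp: p peelA.simps m_assoc)
  next
    case True
    show ?thesis
    proof (cases S)
      case Nil thus ?thesis using pe g True by (auto simp: p peelA.simps)
    next
      case (Cons s S')
      thus ?thesis using pe g True
        by (cases s) (auto simp: p peelA.simps int_pow_mult m_assoc)
    qed
  qed
qed

lemma Psi_mkA:
  assumes g: "g1 \<in> carrier G" "g2 \<in> carrier G"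
  shows "Psi g1 g2 M1 M2 (mkA i e R) = g1 [^] (int M1 * i + int e) \<otimes> PsiS g1 g2 M1 M2 R"
proof (cases "e = 0")
  case True
  show ?thesis
  proof (cases R)
    case Nil thus ?thesis using g True by (auto simp: mkA.simps)
  next
    case (Cons s R')
    thus ?thesis using g True by (cases s) (auto simp: mkA.simps m_assoc)
  qed
next
  case False thus ?thesis using g by (auto simp: mkA.simps int_pow_mult m_assoc)
qed

lemma pow_md:
  assumes g: "g1 \<in> carrier G" and N: "N = 0 \<or> g1 [^] (int M1 * int N) = \<one>"
  shows "g1 [^] (int M1 * md N x) = g1 [^] (int M1 * x)"
proof (cases "N = 0")
  case True thus ?thesis by (simp add: md_def)
next
  case False
  hence one: "g1 [^] (int M1 * int N) = \<one>" using N by simp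
  have "x = int N * (x div int N) + md N x" by (simp add: md_def)
  hence "int M1 * x = (int M1 * int N) * (x div int N) + int M1 * md N x"
    by (metis distrib_left mult.assoc)
  hence "g1 [^] (int M1 * x) = (g1 [^] (int M1 * int N)) [^] (x div int N) \<otimes> g1 [^] (int M1 * md N x)"
    using g by (simp add: int_pow_mult int_pow_pow)
  thus ?thesis using one g by simp
qed

lemma Psi_consA:
  assumes g: "g1 \<in> carrier G" "g2 \<in> carrier G" and N: "N = 0 \<or> g1 [^] (int M1 * int N) = \<one>"
    and M1: "0 < M1" and v: "valid M1 M2 N p"
  shows "Psi g1 g2 M1 M2 (consA M1 N k p) = g1 [^] k \<otimes> Psi g1 g2 M1 M2 p"
proof -
  obtain i e R where pe: "peelA p = (i, e, R)" by (cases "peelA p") auto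
  define q where "q = (k + int e) div int M1"
  define r where "r = (k + int e) mod int M1"
  have r0: "r \<ge> 0" using M1 by (simp add: r_def)
  have kqr: "k + int e = int M1 * q + r" by (simp add: q_def r_def)
  have "Psi g1 g2 M1 M2 (consA M1 N k p) = g1 [^] (int M1 * md N (i + q) + r) \<otimes> PsiS g1 g2 M1 M2 R"
    using Psi_mkA[OF g] r0 by (simp add: consA_def pe q_def[symmetric] r_def[symmetric])
  also have "g1 [^] (int M1 * md N (i + q) + r) = g1 [^] (int M1 * (i + q) + r)"
    using pow_md[OF g(1) N] g by (simp add: int_pow_mult)
  also have "int M1 * (i + q) + r = k + (int M1 * i + int e)" using kqr by (simp add: algebra_simps)
  also have "g1 [^] (k + (int M1 * i + int e)) \<otimes> PsiS g1 g2 M1 M2 R = g1 [^] k \<otimes> Psi g1 g2 M1 M2 p"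
    using Psi_peelA[OF g v pe] g by (simp add: int_pow_mult m_assoc)
  finally show ?thesis .
qed

lemma Psi_consB:
  assumes g: "g1 \<in> carrier G" "g2 \<in> carrier G" and N: "N = 0 \<or> g2 [^] (int M2 * int N) = \<one>"
    and M2: "0 < M2" and v: "valid M1 M2 N p"
    and c: "g1 [^] (int M1) \<otimes> g2 [^] (int M2) = g2 [^] (int M2) \<otimes> g1 [^] (int M1)"
  shows "Psi g1 g2 M1 M2 (consB M2 N k p) = g2 [^] k \<otimes> Psi g1 g2 M1 M2 p"
proof -
  have c': "g2 [^] (int M2) \<otimes> g1 [^] (int M1) = g1 [^] (int M1) \<otimes> g2 [^] (int M2)" using c by simp
  have v': "valid M2 M1 N (swp p)" using v by simp
  have "Psi g1 g2 M1 M2 (consB M2 N k p) = Psi g2 g1 M2 M1 (consA M2 N k (swp p))"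
    unfolding consB_def using Psi_swp[OF g c] by simp
  also have "\<dots> = g2 [^] k \<otimes> Psi g2 g1 M2 M1 (swp p)"
    using Psi_consA[OF g(2,1) N M2 v'] .
  also have "Psi g2 g1 M2 M1 (swp p) = Psi g1 g2 M1 M2 p"
    using Psi_swp[OF g(2,1) c', of "p"] by simp
  finally show ?thesis .
qed

end


declare mkA.simps[simp del] peelA.simps[simp del]

lemma consA_pre:
  assumes "0 < e" "e < m" "j \<noteq> 0 \<or> (case T of SA _ # _ \<Rightarrow> False | _ \<Rightarrow> True)"
  shows "consA m N (int e) (0, j, T) = (0, 0, SA e # (if j = 0 then T else SD j # T))"
proof -
  have d: "(int e) div int m = 0" "nat (int e mod int m) = e" using assms by auto
  show ?thesis
  proof (cases "j = 0")
    case False thus ?thesis using assms d by (simp add: consA_def peelA.simps mkA.simps)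
  next
    case True
    have pe: "peelA (0, 0, T) = (0, 0, T)" using assms(3) True
      by (auto simp: peelA.simps split: list.split syl.split)
    show ?thesis using d assms True by (simp add: consA_def pe mkA.simps)
  qed
qed

lemma consB_pre:
  assumes "0 < f" "f < n" "i \<noteq> 0 \<or> (case T of SB _ # _ \<Rightarrow> False | _ \<Rightarrow> True)"
  shows "consB n N (int f) (i, 0, T) = (0, 0, SB f # (if i = 0 then T else SC i # T))"
proof -
  have "i \<noteq> 0 \<or> (case map swS T of SA _ # _ \<Rightarrow> False | _ \<Rightarrow> True)"
    using assms(3) by (cases T rule: list.exhaust; cases "hd T") auto
  from consA_pre[OF assms(1,2) this, of N] show ?thesis
    by (simp add: consB_def comp_def)
qed

fun nf_of :: "syl list \<Rightarrow> nf" where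
  "nf_of (SD j # S) = (0, j, S)" | "nf_of (SC i # S) = (i, 0, S)" | "nf_of S = (0, 0, S)"

lemma invw_gen_pow[simp]: "invw (gen_pow g k) = gen_ipow g k" "invw (gen_ipow g k) = gen_pow g k"
  by (simp_all add: gen_pow_def gen_ipow_def invw_def inv_letter_def)

lemma nf_of_startok: "startok S \<Longrightarrow> nf_of S = (0, 0, S)"
  by (cases S rule: startok.cases) auto

locale nfs =
  fixes m n N :: nat
  assumes m_pos: "0 < m" and n_pos: "0 < n"
begin

abbreviation "RR \<equiv> relsN m n N"
abbreviation "GG \<equiv> pres_group RR"
abbreviation "cl \<equiv> word_cls RR"

definition al where "al = cl [(False, False)]"
definition be where "be = cl [(True, False)]"

lemma grp: "group GG" by (rule pres_group_is_group)

interpretation grp: group GG by (rule grp)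

lemma cl_carrier[simp]: "cl w \<in> carrier GG" by (simp add: pres_carrier)
lemma al_carrier[simp]: "al \<in> carrier GG" by (simp add: al_def)
lemma be_carrier[simp]: "be \<in> carrier GG" by (simp add: be_def)

lemma cl_mult: "cl u \<otimes>\<^bsub>GG\<^esub> cl v = cl (u @ v)" by (rule pres_mult)

lemma cl_Cons: "cl (x # w) = cl [x] \<otimes>\<^bsub>GG\<^esub> cl w" by (simp add: cl_mult)

lemma carrier_cl: "x \<in> carrier GG \<Longrightarrow> \<exists>w. x = cl w" by (auto simp: pres_carrier)

lemma pow_letter: "cl [(g, b)] [^]\<^bsub>GG\<^esub> (k::nat) = cl (replicate k (g, b))"
proof (induction k)
  case 0 thus ?case by (simp add: pres_one)
next
  case (Suc k)
  thus ?case by (simp add: cl_mult replicate_append_same[symmetric] del: replicate_append_same)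
qed

lemma al_pow_nat: "al [^]\<^bsub>GG\<^esub> (k::nat) = cl (gen_pow False k)"
  by (simp add: al_def gen_pow_def pow_letter)
lemma be_pow_nat: "be [^]\<^bsub>GG\<^esub> (k::nat) = cl (gen_pow True k)"
  by (simp add: be_def gen_pow_def pow_letter)
lemma inv_al: "inv\<^bsub>GG\<^esub> al = cl [(False, True)]"
  by (simp add: al_def pres_inv inv_letter_def)
lemma inv_be: "inv\<^bsub>GG\<^esub> be = cl [(True, True)]"
  by (simp add: be_def pres_inv inv_letter_def)
lemma inv_al_pow_nat: "(inv\<^bsub>GG\<^esub> al) [^]\<^bsub>GG\<^esub> (k::nat) = cl (gen_ipow False k)"
  by (simp add: inv_al gen_ipow_def pow_letter)
lemma inv_be_pow_nat: "(inv\<^bsub>GG\<^esub> be) [^]\<^bsub>GG\<^esub> (k::nat) = cl (gen_ipow True k)"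
  by (simp add: inv_be gen_ipow_def pow_letter)

lemma cl_rel: "r \<in> RR \<Longrightarrow> cl r = cl []"
  using word_eqv.relator[of r RR "[]" "[]"] by (simp add: cls_eq_iff)

lemma al_mN: "N = 0 \<or> al [^]\<^bsub>GG\<^esub> (int m * int N) = \<one>\<^bsub>GG\<^esub>"
proof (cases "N = 0")
  case False
  have "al [^]\<^bsub>GG\<^esub> (int m * int N) = al [^]\<^bsub>GG\<^esub> (m * N)"
    by (metis int_pow_int of_nat_mult)
  also have "\<dots> = cl (gen_pow False (m * N))" by (rule al_pow_nat)
  also have "\<dots> = cl []"
  proof (rule cl_rel)
    show "gen_pow False (m * N) \<in> RR" using False by (simp add: relsN_def rels_Gt_def)
  qed
  finally show ?thesis by (simp add: pres_one)
qed simp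

lemma be_nN: "N = 0 \<or> be [^]\<^bsub>GG\<^esub> (int n * int N) = \<one>\<^bsub>GG\<^esub>"
proof (cases "N = 0")
  case False
  have "be [^]\<^bsub>GG\<^esub> (int n * int N) = be [^]\<^bsub>GG\<^esub> (n * N)"
    by (metis int_pow_int of_nat_mult)
  also have "\<dots> = cl (gen_pow True (n * N))" by (rule be_pow_nat)
  also have "\<dots> = cl []"
  proof (rule cl_rel)
    show "gen_pow True (n * N) \<in> RR" using False by (simp add: relsN_def rels_Gt_def)
  qed
  finally show ?thesis by (simp add: pres_one)
qed simp

lemma comm: "al [^]\<^bsub>GG\<^esub> (int m) \<otimes>\<^bsub>GG\<^esub> be [^]\<^bsub>GG\<^esub> (int n) = be [^]\<^bsub>GG\<^esub> (int n) \<otimes>\<^bsub>GG\<^esub> al [^]\<^bsub>GG\<^esub> (int m)"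
proof -
  define A where "A = al [^]\<^bsub>GG\<^esub> m"
  define B where "B = be [^]\<^bsub>GG\<^esub> n"
  have AB: "A \<in> carrier GG" "B \<in> carrier GG" by (simp_all add: A_def B_def)
  have "cl (gen_ipow False m @ gen_ipow True n @ gen_pow False m @ gen_pow True n) = cl []"
    by (rule cl_rel) (simp add: relsN_def rels_Gt_def rels_G_def)
  hence "inv\<^bsub>GG\<^esub> A \<otimes>\<^bsub>GG\<^esub> (inv\<^bsub>GG\<^esub> B \<otimes>\<^bsub>GG\<^esub> (A \<otimes>\<^bsub>GG\<^esub> B)) = \<one>\<^bsub>GG\<^esub>"
    by (simp add: A_def B_def pres_inv al_pow_nat be_pow_nat cl_mult pres_one)
  hence "inv\<^bsub>GG\<^esub> (B \<otimes>\<^bsub>GG\<^esub> A) \<otimes>\<^bsub>GG\<^esub> (A \<otimes>\<^bsub>GG\<^esub> B) = \<one>\<^bsub>GG\<^esub>"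
    using AB by (simp add: grp.inv_mult_group grp.m_assoc)
  hence "A \<otimes>\<^bsub>GG\<^esub> B = B \<otimes>\<^bsub>GG\<^esub> A"
    using AB by (metis grp.inv_closed grp.inv_inv grp.inv_equality grp.m_closed)
  thus ?thesis by (simp add: A_def B_def int_pow_int)
qed

definition ACT :: "word set \<Rightarrow> nf \<Rightarrow> nf" where
  "ACT x p = act m n N (SOME w. x = cl w) p"

lemma ACT_cls: "valid m n N p \<Longrightarrow> ACT (cl w) p = act m n N w p"
proof -
  assume v: "valid m n N p"
  define w' where "w' = (SOME w'. cl w = cl w')"
  have "cl w = cl w'" unfolding w'_def by (rule someI[of _ w]) simp
  hence "word_eqv RR w' w" by (simp add: cls_eq_iff word_eqv.sym)
  thus ?thesis using act_eqv[OF m_pos n_pos _ v] by (simp add: ACT_def w'_def)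
qed

lemma ACT_valid: "x \<in> carrier GG \<Longrightarrow> valid m n N p \<Longrightarrow> valid m n N (ACT x p)"
  using carrier_cl ACT_cls act_valid[OF m_pos n_pos] by metis

lemma ACT_mult: "x \<in> carrier GG \<Longrightarrow> y \<in> carrier GG \<Longrightarrow> valid m n N p \<Longrightarrow>
    ACT (x \<otimes>\<^bsub>GG\<^esub> y) p = ACT x (ACT y p)"
proof -
  assume "x \<in> carrier GG" "y \<in> carrier GG" and v: "valid m n N p"
  then obtain u v where "x = cl u" "y = cl v" using carrier_cl by blast
  thus ?thesis using v act_valid[OF m_pos n_pos v] by (simp add: cl_mult ACT_cls)
qed

lemma ACT_one: "valid m n N p \<Longrightarrow> ACT \<one>\<^bsub>GG\<^esub> p = p"
  by (simp add: pres_one ACT_cls)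

lemma ACT_al_pow: "valid m n N p \<Longrightarrow> ACT (al [^]\<^bsub>GG\<^esub> (k::int)) p = consA m N k p"
proof (cases "k < 0")
  case True
  then obtain k' where k: "k = - int k'" by (metis less_le neg_int_cases)
  assume v: "valid m n N p"
  have "al [^]\<^bsub>GG\<^esub> k = cl (gen_ipow False k')"
    using k by (simp add: grp.int_pow_neg_int grp.nat_pow_inv[symmetric] inv_al_pow_nat)
  thus ?thesis using v k act_gen_ipow_A[OF m_pos v] by (simp add: ACT_cls)
next
  case False
  then obtain k' where k: "k = int k'" by (metis nonneg_int_cases not_less)
  assume v: "valid m n N p"
  have "al [^]\<^bsub>GG\<^esub> k = cl (gen_pow False k')" using k by (simp add: int_pow_int al_pow_nat)
  thus ?thesis using v k act_gen_pow_A[OF m_pos v] by (simp add: ACT_cls)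
qed

lemma ACT_be_pow: "valid m n N p \<Longrightarrow> ACT (be [^]\<^bsub>GG\<^esub> (k::int)) p = consB n N k p"
proof (cases "k < 0")
  case True
  then obtain k' where k: "k = - int k'" by (metis less_le neg_int_cases)
  assume v: "valid m n N p"
  have "be [^]\<^bsub>GG\<^esub> k = cl (gen_ipow True k')"
    using k by (simp add: grp.int_pow_neg_int grp.nat_pow_inv[symmetric] inv_be_pow_nat)
  thus ?thesis using v k act_gen_ipow_B[OF n_pos v] by (simp add: ACT_cls)
next
  case False
  then obtain k' where k: "k = int k'" by (metis nonneg_int_cases not_less)
  assume v: "valid m n N p"
  have "be [^]\<^bsub>GG\<^esub> k = cl (gen_pow True k')" using k by (simp add: int_pow_int be_pow_nat)
  thus ?thesis using v k act_gen_pow_B[OF n_pos v] by (simp add: ACT_cls)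
qed

definition "base = ((0::int), (0::int), ([]::syl list))"

lemma base_valid[simp]: "valid m n N base" by (simp add: base_def)

definition Phi :: "word set \<Rightarrow> nf" where "Phi x = ACT x base"

abbreviation PsiG :: "nf \<Rightarrow> word set" where "PsiG p \<equiv> grp.Psi al be m n p"

lemma Phi_valid: "x \<in> carrier GG \<Longrightarrow> valid m n N (Phi x)"
  by (simp add: Phi_def ACT_valid)

lemma Phi_mult: "x \<in> carrier GG \<Longrightarrow> y \<in> carrier GG \<Longrightarrow> Phi (x \<otimes>\<^bsub>GG\<^esub> y) = ACT x (Phi y)"
  by (simp add: Phi_def ACT_mult)

lemma Psi_letter: "valid m n N p \<Longrightarrow> PsiG (act_letter m n N l p) = cl [l] \<otimes>\<^bsub>GG\<^esub> PsiG p"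
proof -
  assume v: "valid m n N p"
  obtain g b where l: "l = (g, b)" by (cases l) auto
  have A: "PsiG (consA m N k p) = al [^]\<^bsub>GG\<^esub> k \<otimes>\<^bsub>GG\<^esub> PsiG p" for k
    by (rule grp.Psi_consA[OF al_carrier be_carrier al_mN m_pos v])
  have B: "PsiG (consB n N k p) = be [^]\<^bsub>GG\<^esub> k \<otimes>\<^bsub>GG\<^esub> PsiG p" for k
    by (rule grp.Psi_consB[OF al_carrier be_carrier be_nN n_pos v comm])
  show ?thesis
    using A[of 1] A[of "-1"] B[of 1] B[of "-1"]
    by (cases g; cases b) (auto simp: act_letter_def l al_def[symmetric] be_def[symmetric] inv_al[symmetric] inv_be[symmetric] grp.int_pow_neg)
qed

lemma Psi_act: "PsiG (act m n N w base) = cl w"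
proof (induction w)
  case Nil thus ?case by (simp add: base_def pres_one)
next
  case (Cons l w)
  have "valid m n N (act m n N w base)" by (rule act_valid[OF m_pos n_pos base_valid])
  thus ?case using Psi_letter Cons by (simp add: cl_Cons[of l w])
qed

lemma Psi_Phi: "x \<in> carrier GG \<Longrightarrow> PsiG (Phi x) = x"
  using carrier_cl Psi_act by (metis ACT_cls Phi_def base_valid)

lemma Phi_inj: "x \<in> carrier GG \<Longrightarrow> y \<in> carrier GG \<Longrightarrow> Phi x = Phi y \<Longrightarrow> x = y"
  by (metis Psi_Phi)

lemma ACT_PsiS: "vlist m n N S \<Longrightarrow> ACT (grp.PsiS al be m n S) base = nf_of S \<and> valid m n N (nf_of S)"
proof (induction S)
  case Nil thus ?case by (simp add: ACT_one base_def)
next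
  case (Cons s S')
  have vS': "vlist m n N S'" using Cons(2) by simp
  have IH: "ACT (grp.PsiS al be m n S') base = nf_of S'" "valid m n N (nf_of S')" using Cons(1)[OF vS'] by auto
  have vs: "vsyl m n N s" using Cons(2) by simp
  have adj: "S' \<noteq> [] \<Longrightarrow> adj s (hd S')" using Cons(2) by (cases S') auto
  have "ACT (grp.PsiS al be m n (s # S')) base = ACT (grp.Psi1 al be m n s) (nf_of S')"
    using IH by (simp add: ACT_mult)
  moreover have "ACT (grp.Psi1 al be m n s) (nf_of S') = nf_of (s # S') \<and> valid m n N (nf_of (s # S'))"
  proof (cases s)
    case (SA e)
    have "ACT (grp.Psi1 al be m n s) (nf_of S') = consA m N (int e) (nf_of S')"
      using IH(2) SA by (simp add: ACT_al_pow)
    also have "\<dots> = nf_of (s # S')"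
    proof (cases S')
      case Nil thus ?thesis using SA vs consA_pre[of e m 0 "[]" N] by simp
    next
      case (Cons t T)
      thus ?thesis using SA vs adj consA_pre[of e m _ _ N] vS'
        by (cases t) auto
    qed
    finally show ?thesis using ACT_valid IH(2)
      by (metis SA grp.Psi1_closed al_carrier be_carrier)
  next
    case (SB f)
    have "ACT (grp.Psi1 al be m n s) (nf_of S') = consB n N (int f) (nf_of S')"
      using IH(2) SB by (simp add: ACT_be_pow)
    also have "\<dots> = nf_of (s # S')"
    proof (cases S')
      case Nil thus ?thesis using SB vs consB_pre[of f n 0 "[]" N] by simp
    next
      case (Cons t T)
      thus ?thesis using SB vs adj consB_pre[of f n _ _ N] vS'
        by (cases t) auto
    qed
    finally show ?thesis using ACT_valid IH(2)
      by (metis SB grp.Psi1_closed al_carrier be_carrier)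
  next
    case (SC i)
    have nf: "nf_of S' = (0, 0, S')"
    proof (cases S')
      case (Cons t T) thus ?thesis using adj SC by (cases t) auto
    qed simp
    have "ACT (grp.Psi1 al be m n s) (nf_of S') = consA m N (int m * i) (0, 0, S')"
      using IH(2) SC nf by (simp add: ACT_al_pow)
    also have "\<dots> = (md N i, 0, S')" using consA_mq[OF m_pos, of n N 0 0 S' i] IH(2) nf by simp
    also have "\<dots> = nf_of (s # S')" using SC vs by simp
    finally show ?thesis using ACT_valid IH(2)
      by (metis SC grp.Psi1_closed al_carrier be_carrier)
  next
    case (SD j)
    have nf: "nf_of S' = (0, 0, S')"
    proof (cases S')
      case (Cons t T) thus ?thesis using adj SD by (cases t) auto
    qed simp
    have "ACT (grp.Psi1 al be m n s) (nf_of S') = consB n N (int n * j) (0, 0, S')"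
      using IH(2) SD nf by (simp add: ACT_be_pow)
    also have "\<dots> = (0, md N j, S')" using consB_nq[OF n_pos, of m N 0 0 S' j] IH(2) nf by simp
    also have "\<dots> = nf_of (s # S')" using SD vs by simp
    finally show ?thesis using ACT_valid IH(2)
      by (metis SD grp.Psi1_closed al_carrier be_carrier)
  qed
  ultimately show ?case by simp
qed

lemma Phi_Psi: "valid m n N p \<Longrightarrow> Phi (PsiG p) = p"
proof -
  assume v: "valid m n N p"
  obtain i j S where p: "p = (i, j, S)" by (cases p) auto
  have vS: "vlist m n N S" "startok S" "md N i = i" "md N j = j" using v p by auto
  have nf: "nf_of S = (0, 0, S)" using nf_of_startok[OF vS(2)] .
  have v0: "valid m n N (0, 0, S)" using ACT_PsiS[OF vS(1)] nf by simp
  have "Phi (PsiG p) = ACT (al [^]\<^bsub>GG\<^esub> (int m * i)) (ACT (be [^]\<^bsub>GG\<^esub> (int n * j)) (ACT (grp.PsiS al be m n S) base))"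
    by (simp add: p Phi_def ACT_mult ACT_valid)
  also have "\<dots> = consA m N (int m * i) (consB n N (int n * j) (0, 0, S))"
    using ACT_PsiS[OF vS(1)] nf v0 consB_valid[OF n_pos v0]
    by (simp add: ACT_al_pow ACT_be_pow)
  also have "consB n N (int n * j) (0, 0, S) = (0, j, S)"
    using consB_nq[OF n_pos v0, of j] vS by simp
  also have "consA m N (int m * i) (0, j, S) = (i, j, S)"
    using consA_mq[OF m_pos, of n N 0 j S i] consB_nq[OF n_pos v0, of j] consB_valid[OF n_pos v0, of "int n * j"] vS
    by simp
  finally show ?thesis by (simp add: p)
qed

end


declare mkA.simps[simp del] peelA.simps[simp del]

fun isAD :: "syl \<Rightarrow> bool" where
  "isAD (SA _) = True" | "isAD (SD _) = True" | "isAD _ = False"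

definition allA :: "syl list \<Rightarrow> bool" where "allA S = (\<forall>s\<in>set S. isAD s)"
definition allB :: "syl list \<Rightarrow> bool" where "allB S = (\<forall>s\<in>set S. \<not> isAD s)"

fun appS :: "nf \<Rightarrow> syl list \<Rightarrow> nf" where "appS (i, j, S) T = (i, j, S @ T)"

fun Sof :: "nf \<Rightarrow> syl list" where "Sof (i, j, S) = S"

definition hdnotAD :: "syl list \<Rightarrow> bool" where
  "hdnotAD S = (case S of [] \<Rightarrow> True | s # _ \<Rightarrow> \<not> isAD s)"

lemma isAD_swS[simp]: "isAD (swS s) = (\<not> isAD s)" by (cases s) auto

lemma allA_swS[simp]: "allA (map swS S) = allB S" by (simp add: allA_def allB_def)
lemma allB_swS[simp]: "allB (map swS S) = allA S" by (simp add: allA_def allB_def)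

lemma consA_local:
  assumes m: "0 < m" and v: "valid m n N (i, j, S @ T)" and a: "allA S" and h: "hdnotAD T"
  shows "consA m N k (i, j, S @ T) = appS (consA m N k (i, j, S)) T \<and> allA (Sof (consA m N k (i, j, S)))"
proof -
  obtain i' e R where pe: "peelA (i, j, S) = (i', e, R)" by (cases "peelA (i, j, S)") auto
  have pe2: "peelA (i, j, S @ T) = (i', e, R @ T)" and R: "allA R" "R = [] \<or> (\<exists>j'. hd R = SD j')"
  proof -
    have "peelA (i, j, S @ T) = (i', e, R @ T) \<and> allA R \<and> (R = [] \<or> (\<exists>j'. hd R = SD j'))"
    proof (cases "j = 0")
      case False thus ?thesis using pe a by (auto simp: peelA.simps allA_def)
    next
      case True
      show ?thesis
      proof (cases S)
        case Nil
        thus ?thesis using pe True h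
          by (cases T; cases "hd T") (auto simp: peelA.simps allA_def hdnotAD_def)
      next
        case (Cons s S')
        show ?thesis
        proof (cases s)
          case (SA e')
          have "S' = [] \<or> (\<exists>j'. hd S' = SD j')"
          proof (cases S')
            case (Cons t S'')
            hence "adj s t" "isAD t" using v Cons a \<open>S = s # S'\<close> by (auto simp: allA_def)
            thus ?thesis using Cons SA by (cases t) auto
          qed simp
          thus ?thesis using pe True Cons SA a by (auto simp: peelA.simps allA_def)
        next
          case (SD x) thus ?thesis using v True Cons by simp
        qed (use a Cons in \<open>auto simp: allA_def\<close>)
      qed
    qed
    thus "peelA (i, j, S @ T) = (i', e, R @ T)" "allA R" "R = [] \<or> (\<exists>j'. hd R = SD j')" by auto
  qed
  define i2 where "i2 = md N (i' + (k + int e) div int m)"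
  define e2 where "e2 = nat ((k + int e) mod int m)"
  have c1: "consA m N k (i, j, S @ T) = mkA i2 e2 (R @ T)" by (simp add: consA_def pe2 i2_def e2_def)
  have c2: "consA m N k (i, j, S) = mkA i2 e2 R" by (simp add: consA_def pe i2_def e2_def)
  have "mkA i2 e2 (R @ T) = appS (mkA i2 e2 R) T \<and> allA (Sof (mkA i2 e2 R))"
  proof (cases "e2 = 0")
    case False thus ?thesis using R by (simp add: mkA.simps allA_def)
  next
    case True
    show ?thesis
    proof (cases R)
      case Nil thus ?thesis using True h
        by (cases T; cases "hd T") (auto simp: mkA.simps allA_def hdnotAD_def)
    next
      case (Cons r R') thus ?thesis using True R by (auto simp: mkA.simps allA_def)
    qed
  qed
  thus ?thesis using c1 c2 by simp
qed

lemma swp_appS: "swp (appS q (map swS T)) = appS (swp q) T"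
  by (cases q) (auto simp: comp_def)

lemma Sof_swp: "Sof (swp q) = map swS (Sof q)" by (cases q) auto

lemma consB_local:
  assumes nn: "0 < n" and v: "valid m n N (i, j, S @ T)" and a: "allB S" and h: "hdnotAD (map swS T)"
  shows "consB n N k (i, j, S @ T) = appS (consB n N k (i, j, S)) T \<and> allB (Sof (consB n N k (i, j, S)))"
proof -
  have v': "valid n m N (j, i, map swS S @ map swS T)" using v by (metis swp.simps valid_swp map_append)
  have "allA (map swS S)" using a by simp
  from consA_local[OF nn v' this h, of k]
  show ?thesis unfolding consB_def
    by (simp add: swp_appS[symmetric] Sof_swp comp_def)
qed

definition PA :: "nat \<Rightarrow> word set" where
  "PA n = {[(False, False)], [(False, True)], gen_pow True n, gen_ipow True n}"
definition PB :: "nat \<Rightarrow> word set" where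
  "PB m = {[(True, False)], [(True, True)], gen_pow False m, gen_ipow False m}"

lemma hdnotAD_swS: "hdnotAD (map swS T) = (case T of [] \<Rightarrow> True | s # _ \<Rightarrow> isAD s)"
  by (cases T) (auto simp: hdnotAD_def)

lemma act_local_A:
  assumes mn: "0 < m" "0 < n" and w: "w \<in> wordsof (PA n)"
  shows "valid m n N (i, j, S @ T) \<Longrightarrow> allA S \<Longrightarrow> hdnotAD T \<Longrightarrow>
    act m n N w (i, j, S @ T) = appS (act m n N w (i, j, S)) T \<and> allA (Sof (act m n N w (i, j, S)))"
  using w
proof (induction arbitrary: i j S rule: wordsof.induct)
  case nil thus ?case by simp
next
  case (cons p w)
  obtain i' j' S' where q: "act m n N w (i, j, S) = (i', j', S')" by (cases "act m n N w (i, j, S)") auto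
  have IH: "act m n N w (i, j, S @ T) = (i', j', S' @ T)" "allA S'"
    using cons.IH[OF cons.prems] q by auto
  have v': "valid m n N (i', j', S' @ T)" using act_valid[OF mn cons.prems(1), of w] IH by simp
  have vS: "valid m n N (i, j, S)"
  proof -
    have "vlist m n N S" using cons.prems(1) by (auto simp: vlist_def successively_append_iff)
    moreover have "startok S" using cons.prems(1) by (cases S rule: startok.cases) auto
    ultimately show ?thesis using cons.prems(1) by simp
  qed
  have v'': "valid m n N (i', j', S')" using act_valid[OF mn vS, of w] q by simp
  have vq: "valid m n N (i', j', S')" by (rule v'')
  have "act m n N p (i', j', S' @ T) = appS (act m n N p (i', j', S')) T \<and> allA (Sof (act m n N p (i', j', S')))"
  proof -
    consider "p = [(False, False)]" | "p = [(False, True)]" | "p = gen_pow True n" | "p = gen_ipow True n"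
      using cons.hyps(1) by (auto simp: PA_def)
    thus ?thesis
    proof cases
      case 1 thus ?thesis using consA_local[OF mn(1) v' IH(2) cons.prems(3)] by (simp add: act_letter_def)
    next
      case 2 thus ?thesis using consA_local[OF mn(1) v' IH(2) cons.prems(3)] by (simp add: act_letter_def)
    next
      case 3 thus ?thesis using v' vq IH(2) act_gen_pow_B[OF mn(2) v'] act_gen_pow_B[OF mn(2) vq]
          consB_nq[OF mn(2) v', of 1] consB_nq[OF mn(2) vq, of 1] by simp
    next
      case 4 thus ?thesis using v' vq IH(2) act_gen_ipow_B[OF mn(2) v'] act_gen_ipow_B[OF mn(2) vq]
          consB_nq[OF mn(2) v', of "-1"] consB_nq[OF mn(2) vq, of "-1"] by simp
    qed
  qed
  thus ?case using IH q by simp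
qed

lemma act_local_B:
  assumes mn: "0 < m" "0 < n" and w: "w \<in> wordsof (PB m)"
  shows "valid m n N (i, j, S @ T) \<Longrightarrow> allB S \<Longrightarrow> hdnotAD (map swS T) \<Longrightarrow>
    act m n N w (i, j, S @ T) = appS (act m n N w (i, j, S)) T \<and> allB (Sof (act m n N w (i, j, S)))"
  using w
proof (induction arbitrary: i j S rule: wordsof.induct)
  case nil thus ?case by simp
next
  case (cons p w)
  obtain i' j' S' where q: "act m n N w (i, j, S) = (i', j', S')" by (cases "act m n N w (i, j, S)") auto
  have IH: "act m n N w (i, j, S @ T) = (i', j', S' @ T)" "allB S'"
    using cons.IH[OF cons.prems] q by auto
  have v': "valid m n N (i', j', S' @ T)" using act_valid[OF mn cons.prems(1), of w] IH by simp
  have vS: "valid m n N (i, j, S)"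
  proof -
    have "vlist m n N S" using cons.prems(1) by (auto simp: vlist_def successively_append_iff)
    moreover have "startok S" using cons.prems(1) by (cases S rule: startok.cases) auto
    ultimately show ?thesis using cons.prems(1) by simp
  qed
  have vq: "valid m n N (i', j', S')" using act_valid[OF mn vS, of w] q by simp
  have "act m n N p (i', j', S' @ T) = appS (act m n N p (i', j', S')) T \<and> allB (Sof (act m n N p (i', j', S')))"
  proof -
    consider "p = [(True, False)]" | "p = [(True, True)]" | "p = gen_pow False m" | "p = gen_ipow False m"
      using cons.hyps(1) by (auto simp: PB_def)
    thus ?thesis
    proof cases
      case 1 thus ?thesis using consB_local[OF mn(2) v' IH(2) cons.prems(3)] by (simp add: act_letter_def)
    next
      case 2 thus ?thesis using consB_local[OF mn(2) v' IH(2) cons.prems(3)] by (simp add: act_letter_def)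
    next
      case 3 thus ?thesis using v' vq IH(2) act_gen_pow_A[OF mn(1) v'] act_gen_pow_A[OF mn(1) vq]
          consA_mq[OF mn(1) v', of 1] consA_mq[OF mn(1) vq, of 1] by simp
    next
      case 4 thus ?thesis using v' vq IH(2) act_gen_ipow_A[OF mn(1) v'] act_gen_ipow_A[OF mn(1) vq]
          consA_mq[OF mn(1) v', of "-1"] consA_mq[OF mn(1) vq, of "-1"] by simp
    qed
  qed
  thus ?case using IH q by simp
qed

lemma replicate_wordsof: "[x] \<in> P \<Longrightarrow> replicate k x \<in> wordsof P"
  by (induction k) (auto intro: wordsof.intros dest: wordsof.cons[of "[x]"])

lemma invw_PA: "p \<in> PA n \<Longrightarrow> invw p \<in> wordsof (PA n)"
  by (auto simp: PA_def inv_letter_def intro!: wordsof_piece)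
lemma invw_PB: "p \<in> PB m \<Longrightarrow> invw p \<in> wordsof (PB m)"
  by (auto simp: PB_def inv_letter_def intro!: wordsof_piece)


context nfs
begin

interpretation grp: group GG by (rule grp)

abbreviation "HH \<equiv> sub_H RR m n"
abbreviation "AA \<equiv> sub_A RR m n"
abbreviation "BB \<equiv> sub_B RR m n"

lemma HH_sub_AA: "HH \<subseteq> AA" unfolding sub_A_def by (auto intro: generate.incl)
lemma HH_sub_BB: "HH \<subseteq> BB" unfolding sub_B_def by (auto intro: generate.incl)

lemma HH_carrier: "HH \<subseteq> carrier GG"
  unfolding sub_H_def by (rule grp.generate_incl) auto
lemma AA_subgroup: "subgroup AA GG"
  unfolding sub_A_def by (rule grp.generate_is_subgroup) (use HH_carrier in auto)
lemma BB_subgroup: "subgroup BB GG"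
  unfolding sub_B_def by (rule grp.generate_is_subgroup) (use HH_carrier in auto)
lemma HH_subgroup: "subgroup HH GG"
  unfolding sub_H_def by (rule grp.generate_is_subgroup) auto

lemma HH_words_A: "HH \<subseteq> cl ` wordsof (PA n)"
proof
  fix x assume "x \<in> HH"
  have "gen_pow False m \<in> wordsof (PA n)"
    unfolding gen_pow_def by (rule replicate_wordsof) (simp add: PA_def)
  moreover have "gen_pow True n \<in> wordsof (PA n)" by (rule wordsof_piece) (simp add: PA_def)
  ultimately have X: "{cl (gen_pow False m), cl (gen_pow True n)} \<subseteq> cl ` wordsof (PA n)" by auto
  from generate_sub_cls_wordsof[OF X invw_PA] \<open>x \<in> HH\<close>
  show "x \<in> cl ` wordsof (PA n)" unfolding sub_H_def by blast
qed

lemma HH_words_B: "HH \<subseteq> cl ` wordsof (PB m)"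
proof
  fix x assume "x \<in> HH"
  have "gen_pow True n \<in> wordsof (PB m)"
    unfolding gen_pow_def by (rule replicate_wordsof) (simp add: PB_def)
  moreover have "gen_pow False m \<in> wordsof (PB m)" by (rule wordsof_piece) (simp add: PB_def)
  ultimately have X: "{cl (gen_pow False m), cl (gen_pow True n)} \<subseteq> cl ` wordsof (PB m)" by auto
  from generate_sub_cls_wordsof[OF X invw_PB] \<open>x \<in> HH\<close>
  show "x \<in> cl ` wordsof (PB m)" unfolding sub_H_def by blast
qed

lemma AA_words: "AA \<subseteq> cl ` wordsof (PA n)"
proof
  fix x assume "x \<in> AA"
  have "[(False, False)] \<in> wordsof (PA n)" by (rule wordsof_piece) (simp add: PA_def)
  hence X: "{cl (gen_pow False 1)} \<union> HH \<subseteq> cl ` wordsof (PA n)" using HH_words_A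
    by (auto simp: gen_pow_def)
  from generate_sub_cls_wordsof[OF X invw_PA] \<open>x \<in> AA\<close>
  show "x \<in> cl ` wordsof (PA n)" unfolding sub_A_def by blast
qed

lemma BB_words: "BB \<subseteq> cl ` wordsof (PB m)"
proof
  fix x assume "x \<in> BB"
  have "[(True, False)] \<in> wordsof (PB m)" by (rule wordsof_piece) (simp add: PB_def)
  hence X: "{cl (gen_pow True 1)} \<union> HH \<subseteq> cl ` wordsof (PB m)" using HH_words_B
    by (auto simp: gen_pow_def)
  from generate_sub_cls_wordsof[OF X invw_PB] \<open>x \<in> BB\<close>
  show "x \<in> cl ` wordsof (PB m)" unfolding sub_B_def by blast
qed

lemma Phi_cl: "Phi (cl w) = act m n N w base"
  by (simp add: Phi_def ACT_cls)

lemma AA_Phi: "x \<in> AA \<Longrightarrow> allA (Sof (Phi x))"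
proof -
  assume "x \<in> AA"
  then obtain w where w: "w \<in> wordsof (PA n)" "x = cl w" using AA_words by auto
  have "valid m n N (0, 0, [] @ [])" by simp
  from act_local_A[OF m_pos n_pos w(1) this] show ?thesis
    by (simp add: w(2) Phi_cl base_def allA_def hdnotAD_def)
qed

lemma BB_Phi: "x \<in> BB \<Longrightarrow> allB (Sof (Phi x))"
proof -
  assume "x \<in> BB"
  then obtain w where w: "w \<in> wordsof (PB m)" "x = cl w" using BB_words by auto
  have "valid m n N (0, 0, [] @ [])" by simp
  from act_local_B[OF m_pos n_pos w(1) this] show ?thesis
    by (simp add: w(2) Phi_cl base_def allB_def hdnotAD_def)
qed

lemma al_in_AA: "al \<in> AA"
  unfolding sub_A_def al_def by (rule generate.incl) (simp add: gen_pow_def)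
lemma be_in_BB: "be \<in> BB"
  unfolding sub_B_def be_def by (rule generate.incl) (simp add: gen_pow_def)
lemma alm_in_HH: "al [^]\<^bsub>GG\<^esub> (int m * i) \<in> HH"
proof -
  have "al [^]\<^bsub>GG\<^esub> m \<in> HH" unfolding sub_H_def al_pow_nat by (rule generate.incl) simp
  hence "(al [^]\<^bsub>GG\<^esub> (int m)) [^]\<^bsub>GG\<^esub> i \<in> HH"
    using grp.subgroup_int_pow_closed[OF HH_subgroup] by (simp add: int_pow_int)
  thus ?thesis by (simp add: grp.int_pow_pow)
qed
lemma ben_in_HH: "be [^]\<^bsub>GG\<^esub> (int n * i) \<in> HH"
proof -
  have "be [^]\<^bsub>GG\<^esub> n \<in> HH" unfolding sub_H_def be_pow_nat by (rule generate.incl) simp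
  hence "(be [^]\<^bsub>GG\<^esub> (int n)) [^]\<^bsub>GG\<^esub> i \<in> HH"
    using grp.subgroup_int_pow_closed[OF HH_subgroup] by (simp add: int_pow_int)
  thus ?thesis by (simp add: grp.int_pow_pow)
qed

lemma Psi_in_HH: "PsiG (i, j, []) \<in> HH"
  using alm_in_HH[of i] ben_in_HH[of j] subgroup.m_closed[OF HH_subgroup] subgroup.one_closed[OF HH_subgroup]
  by simp

lemma PsiS_in_AA: "allA S \<Longrightarrow> grp.PsiS al be m n S \<in> AA"
proof (induction S)
  case Nil thus ?case using subgroup.one_closed[OF AA_subgroup] by simp
next
  case (Cons s S)
  have "grp.Psi1 al be m n s \<in> AA"
  proof (cases s)
    case (SA e) thus ?thesis using grp.subgroup_int_pow_closed[OF AA_subgroup al_in_AA] by simp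
  next
    case (SD j) thus ?thesis using ben_in_HH HH_sub_AA by auto
  qed (use Cons.prems in \<open>auto simp: allA_def\<close>)
  moreover have "grp.PsiS al be m n S \<in> AA" using Cons by (simp add: allA_def)
  ultimately show ?case using subgroup.m_closed[OF AA_subgroup] by simp
qed

lemma PsiS_in_BB: "allB S \<Longrightarrow> grp.PsiS al be m n S \<in> BB"
proof (induction S)
  case Nil thus ?case using subgroup.one_closed[OF BB_subgroup] by simp
next
  case (Cons s S)
  have "grp.Psi1 al be m n s \<in> BB"
  proof (cases s)
    case (SB e) thus ?thesis using grp.subgroup_int_pow_closed[OF BB_subgroup be_in_BB] by simp
  next
    case (SC j) thus ?thesis using alm_in_HH HH_sub_BB by auto
  qed (use Cons.prems in \<open>auto simp: allB_def\<close>)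
  moreover have "grp.PsiS al be m n S \<in> BB" using Cons by (simp add: allB_def)
  ultimately show ?case using subgroup.m_closed[OF BB_subgroup] by simp
qed

lemma Psi_in_AA: "allA S \<Longrightarrow> PsiG (i, j, S) \<in> AA"
proof -
  assume S: "allA S"
  have "al [^]\<^bsub>GG\<^esub> (int m * i) \<in> AA" "be [^]\<^bsub>GG\<^esub> (int n * j) \<in> AA"
    using alm_in_HH[of i] ben_in_HH[of j] HH_sub_AA by auto
  moreover have "grp.PsiS al be m n S \<in> AA" by (rule PsiS_in_AA[OF S])
  ultimately show ?thesis using subgroup.m_closed[OF AA_subgroup] by simp
qed
lemma Psi_in_BB: "allB S \<Longrightarrow> PsiG (i, j, S) \<in> BB"
proof -
  assume S: "allB S"
  have "al [^]\<^bsub>GG\<^esub> (int m * i) \<in> BB" "be [^]\<^bsub>GG\<^esub> (int n * j) \<in> BB"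
    using alm_in_HH[of i] ben_in_HH[of j] HH_sub_BB by auto
  moreover have "grp.PsiS al be m n S \<in> BB" by (rule PsiS_in_BB[OF S])
  ultimately show ?thesis using subgroup.m_closed[OF BB_subgroup] by simp
qed

lemma Sof_Psi: "x \<in> carrier GG \<Longrightarrow> x = PsiG (fst (Phi x), fst (snd (Phi x)), Sof (Phi x))"
  using Psi_Phi[of x] by (cases "Phi x") auto

lemma AA_iff: "x \<in> carrier GG \<Longrightarrow> x \<in> AA \<longleftrightarrow> allA (Sof (Phi x))"
  using AA_Phi Psi_in_AA Sof_Psi by metis
lemma BB_iff: "x \<in> carrier GG \<Longrightarrow> x \<in> BB \<longleftrightarrow> allB (Sof (Phi x))"
  using BB_Phi Psi_in_BB Sof_Psi by metis
lemma HH_iff: "x \<in> carrier GG \<Longrightarrow> x \<in> HH \<longleftrightarrow> Sof (Phi x) = []"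
proof
  assume "x \<in> carrier GG" "x \<in> HH"
  hence "allA (Sof (Phi x))" "allB (Sof (Phi x))" using AA_Phi BB_Phi HH_sub_AA HH_sub_BB by auto
  thus "Sof (Phi x) = []" by (cases "Sof (Phi x)") (auto simp: allA_def allB_def)
next
  assume "x \<in> carrier GG" "Sof (Phi x) = []"
  thus "x \<in> HH" using Sof_Psi Psi_in_HH by metis
qed

lemma AA_carrier: "AA \<subseteq> carrier GG" using AA_subgroup subgroup.subset by blast
lemma BB_carrier: "BB \<subseteq> carrier GG" using BB_subgroup subgroup.subset by blast

end

fun blocks :: "syl list \<Rightarrow> nat" where
  "blocks [] = 0" | "blocks [x] = 1"
| "blocks (x # y # S) = (if isAD x = isAD y then 0 else 1) + blocks (y # S)"

lemma blocks_uniform: "allA S \<or> allB S \<Longrightarrow> S \<noteq> [] \<Longrightarrow> blocks S = 1"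
proof (induction S rule: blocks.induct)
  case (3 x y S) thus ?case by (auto simp: allA_def allB_def)
qed auto

lemma blocks_hd_ge1': "S \<noteq> [] \<Longrightarrow> blocks S \<ge> 1"
  by (induction S rule: blocks.induct) auto

lemma blocks_le1: "blocks S \<le> 1 \<Longrightarrow> allA S \<or> allB S"
proof (induction S rule: blocks.induct)
  case (2 x) thus ?case by (cases "isAD x") (auto simp: allA_def allB_def)
next
  case (3 x y S)
  have "blocks (y # S) \<ge> 1" by (rule blocks_hd_ge1') simp
  hence "isAD x = isAD y" "blocks (y # S) \<le> 1" using 3(2) by (auto split: if_splits)
  thus ?case using 3(1) by (auto simp: allA_def allB_def)
qed (auto simp: allA_def)

lemma blocks_app: "S \<noteq> [] \<Longrightarrow> (\<forall>s\<in>set S. isAD s = b) \<Longrightarrow> T \<noteq> [] \<Longrightarrow> isAD (hd T) \<noteq> b \<Longrightarrow>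
   blocks (S @ T) = 1 + blocks T"
proof (induction S rule: blocks.induct)
  case (2 x) thus ?case by (cases T) auto
next
  case (3 x y S) thus ?case by auto
qed auto

lemma blocks_hd_ge1: "S \<noteq> [] \<Longrightarrow> blocks S \<ge> 1"
  by (induction S rule: blocks.induct) auto

context nfs
begin

interpretation grp: group GG by (rule grp)

lemma AB_HH: "x \<in> AA \<Longrightarrow> x \<in> BB \<Longrightarrow> x \<in> HH"
proof -
  assume a: "x \<in> AA" "x \<in> BB"
  hence c: "x \<in> carrier GG" using AA_carrier by auto
  have "allA (Sof (Phi x))" "allB (Sof (Phi x))" using a AA_Phi BB_Phi by auto
  hence "Sof (Phi x) = []" by (cases "Sof (Phi x)") (auto simp: allA_def allB_def)
  thus ?thesis using HH_iff[OF c] by simp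
qed

definition altP :: "word set list \<Rightarrow> bool" where
  "altP ys = ((\<forall>y\<in>set ys. y \<in> (AA \<union> BB) - HH) \<and>
     (\<forall>i. Suc i < length ys \<longrightarrow> \<not> (ys ! i \<in> AA \<and> ys ! Suc i \<in> AA) \<and> \<not> (ys ! i \<in> BB \<and> ys ! Suc i \<in> BB)))"

lemma altP_Cons: "altP (y # ys) \<longleftrightarrow> y \<in> (AA \<union> BB) - HH \<and> altP ys \<and>
   (ys \<noteq> [] \<longrightarrow> \<not> (y \<in> AA \<and> hd ys \<in> AA) \<and> \<not> (y \<in> BB \<and> hd ys \<in> BB))"
proof
  assume a: "altP (y # ys)"
  have "\<forall>i. Suc i < length ys \<longrightarrow> \<not> (ys ! i \<in> AA \<and> ys ! Suc i \<in> AA) \<and> \<not> (ys ! i \<in> BB \<and> ys ! Suc i \<in> BB)"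
  proof (intro allI impI)
    fix i assume "Suc i < length ys"
    thus "\<not> (ys ! i \<in> AA \<and> ys ! Suc i \<in> AA) \<and> \<not> (ys ! i \<in> BB \<and> ys ! Suc i \<in> BB)"
      using a unfolding altP_def by (metis Suc_less_eq length_Cons nth_Cons_Suc)
  qed
  moreover have "ys \<noteq> [] \<longrightarrow> \<not> (y \<in> AA \<and> hd ys \<in> AA) \<and> \<not> (y \<in> BB \<and> hd ys \<in> BB)"
    using a unfolding altP_def by (metis hd_conv_nth length_Cons length_greater_0_conv nth_Cons_0 nth_Cons_Suc zero_less_Suc Suc_less_eq)
  ultimately show "y \<in> (AA \<union> BB) - HH \<and> altP ys \<and>
   (ys \<noteq> [] \<longrightarrow> \<not> (y \<in> AA \<and> hd ys \<in> AA) \<and> \<not> (y \<in> BB \<and> hd ys \<in> BB))"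
    using a unfolding altP_def by auto
next
  assume a: "y \<in> (AA \<union> BB) - HH \<and> altP ys \<and>
   (ys \<noteq> [] \<longrightarrow> \<not> (y \<in> AA \<and> hd ys \<in> AA) \<and> \<not> (y \<in> BB \<and> hd ys \<in> BB))"
  have P1: "\<forall>y\<in>set (y # ys). y \<in> (AA \<union> BB) - HH" using a by (auto simp: altP_def)
  have P2: "\<forall>i. Suc i < length (y # ys) \<longrightarrow> \<not> ((y # ys) ! i \<in> AA \<and> (y # ys) ! Suc i \<in> AA) \<and> \<not> ((y # ys) ! i \<in> BB \<and> (y # ys) ! Suc i \<in> BB)"
  proof (intro allI impI)
    fix i assume i: "Suc i < length (y # ys)"
    show "\<not> ((y # ys) ! i \<in> AA \<and> (y # ys) ! Suc i \<in> AA) \<and> \<not> ((y # ys) ! i \<in> BB \<and> (y # ys) ! Suc i \<in> BB)"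
    proof (cases i)
      case 0 thus ?thesis using a i by (cases ys) auto
    next
      case (Suc k) thus ?thesis using a i by (auto simp: altP_def)
    qed
  qed
  show "altP (y # ys)" using P1 P2 unfolding altP_def by blast
qed

lemma list_prod_simps[simp]: "list_prod GG [] = \<one>\<^bsub>GG\<^esub>"
  "list_prod GG (y # ys) = y \<otimes>\<^bsub>GG\<^esub> list_prod GG ys"
  by (simp_all add: list_prod_def)

lemma list_prod_carrier: "set ys \<subseteq> carrier GG \<Longrightarrow> list_prod GG ys \<in> carrier GG"
  by (induction ys) auto

lemma altP_carrier: "altP ys \<Longrightarrow> set ys \<subseteq> carrier GG"
  using AA_carrier BB_carrier by (auto simp: altP_def)

lemma Phi_decomp: "x \<in> carrier GG \<Longrightarrow> Phi x = (fst (Phi x), fst (snd (Phi x)), Sof (Phi x))"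
  by (cases "Phi x") auto

lemma BC: "altP ys \<Longrightarrow> ys \<noteq> [] \<Longrightarrow>
   blocks (Sof (Phi (list_prod GG ys))) = length ys \<and> Sof (Phi (list_prod GG ys)) \<noteq> [] \<and>
   (isAD (hd (Sof (Phi (list_prod GG ys)))) \<longleftrightarrow> hd ys \<in> AA)"
proof (induction ys)
  case Nil thus ?case by simp
next
  case (Cons y ys)
  have y: "y \<in> (AA \<union> BB) - HH" "altP ys"
    and alt: "ys \<noteq> [] \<Longrightarrow> \<not> (y \<in> AA \<and> hd ys \<in> AA) \<and> \<not> (y \<in> BB \<and> hd ys \<in> BB)"
    using Cons.prems(1) altP_Cons by auto
  have yc: "y \<in> carrier GG" using y AA_carrier BB_carrier by auto
  have ysc: "list_prod GG ys \<in> carrier GG" using altP_carrier[OF y(2)] list_prod_carrier by blast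
  show ?case
  proof (cases "ys = []")
    case True
    have lp: "list_prod GG (y # ys) = y" using True yc by simp
    have ne: "Sof (Phi y) \<noteq> []" using y HH_iff[OF yc] by auto
    show ?thesis
    proof (cases "y \<in> AA")
      case True
      hence "allA (Sof (Phi y))" using AA_Phi by blast
      thus ?thesis using lp ne blocks_uniform \<open>ys = []\<close> True
        by (cases "Sof (Phi y)") (auto simp: allA_def)
    next
      case False
      hence "allB (Sof (Phi y))" using BB_Phi y by blast
      thus ?thesis using lp ne blocks_uniform \<open>ys = []\<close> False
        by (cases "Sof (Phi y)") (auto simp: allB_def)
    qed
  next
    case False
    note IH = Cons.IH[OF y(2) False]
    obtain i j T where PT: "Phi (list_prod GG ys) = (i, j, T)" by (cases "Phi (list_prod GG ys)") auto
    have vT: "valid m n N (i, j, T)" using Phi_valid[OF ysc] PT by simp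
    have v0: "valid m n N (i, j, [])" using vT by simp
    define h where "h = PsiG (i, j, [])"
    have hH: "h \<in> HH" unfolding h_def by (rule Psi_in_HH)
    have hc: "h \<in> carrier GG" using hH HH_carrier by auto
    have Ph: "Phi h = (i, j, [])" unfolding h_def by (rule Phi_Psi[OF v0])
    have yh: "y \<otimes>\<^bsub>GG\<^esub> h \<notin> HH"
    proof
      assume "y \<otimes>\<^bsub>GG\<^esub> h \<in> HH"
      hence "(y \<otimes>\<^bsub>GG\<^esub> h) \<otimes>\<^bsub>GG\<^esub> inv\<^bsub>GG\<^esub> h \<in> HH"
        using hH subgroup.m_closed[OF HH_subgroup] subgroup.m_inv_closed[OF HH_subgroup] by blast
      hence "y \<in> HH" using yc hc by (simp add: grp.m_assoc)
      thus False using y by simp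
    qed
    have yhc: "y \<otimes>\<^bsub>GG\<^esub> h \<in> carrier GG" using yc hc by simp
    have Syh: "Sof (Phi (y \<otimes>\<^bsub>GG\<^esub> h)) \<noteq> []" using yh HH_iff[OF yhc] by simp
    have Pyh: "Phi (y \<otimes>\<^bsub>GG\<^esub> h) = ACT y (i, j, [])" using Phi_mult[OF yc hc] Ph by simp
    have Pyz: "Phi (list_prod GG (y # ys)) = ACT y (i, j, [] @ T)" using Phi_mult[OF yc ysc] PT by simp
    have Tne: "T \<noteq> []" using IH PT by simp
    have bT: "blocks T = length ys" using IH PT by simp
    show ?thesis
    proof (cases "y \<in> AA")
      case True
      then obtain w where w: "w \<in> wordsof (PA n)" "y = cl w" using AA_words by auto
      have "hd ys \<notin> AA" using alt False True by blast
      hence hT: "hdnotAD T" using IH PT Tne by (cases T) (auto simp: hdnotAD_def)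
      have loc: "act m n N w (i, j, [] @ T) = appS (act m n N w (i, j, [])) T \<and> allA (Sof (act m n N w (i, j, [])))"
        using act_local_A[OF m_pos n_pos w(1), where i=i and j=j and S="[]" and T=T and N=N] vT hT by (simp add: allA_def)
      obtain i' j' S' where q: "act m n N w (i, j, []) = (i', j', S')" by (cases "act m n N w (i, j, [])") auto
      have S'ne: "S' \<noteq> []" using Syh Pyh w(2) ACT_cls[OF v0] q by simp
      have aS': "allA S'" using loc q by simp
      have res: "Sof (Phi (list_prod GG (y # ys))) = S' @ T"
        using Pyz w(2) ACT_cls[OF vT] loc q by simp
      have "blocks (S' @ T) = 1 + blocks T"
        by (rule blocks_app[OF S'ne _ Tne, of True]) (use aS' hT Tne in \<open>auto simp: allA_def hdnotAD_def neq_Nil_conv\<close>)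
      thus ?thesis using res bT S'ne aS' True by (cases S') (auto simp: allA_def)
    next
      case yA: False
      hence yB: "y \<in> BB" using y by auto
      then obtain w where w: "w \<in> wordsof (PB m)" "y = cl w" using BB_words by auto
      have "hd ys \<notin> BB" using alt False yB by blast
      moreover have "hd ys \<in> AA \<union> BB" using y(2) False by (auto simp: altP_def)
      ultimately have "hd ys \<in> AA" by auto
      hence hT: "isAD (hd T)" using IH PT by simp
      have hT': "hdnotAD (map swS T)" using hT Tne by (cases T) (auto simp: hdnotAD_def)
      have loc: "act m n N w (i, j, [] @ T) = appS (act m n N w (i, j, [])) T \<and> allB (Sof (act m n N w (i, j, [])))"
        using act_local_B[OF m_pos n_pos w(1), where i=i and j=j and S="[]" and T=T and N=N] vT hT' by (simp add: allB_def)
      obtain i' j' S' where q: "act m n N w (i, j, []) = (i', j', S')" by (cases "act m n N w (i, j, [])") auto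
      have S'ne: "S' \<noteq> []" using Syh Pyh w(2) ACT_cls[OF v0] q by simp
      have aS': "allB S'" using loc q by simp
      have res: "Sof (Phi (list_prod GG (y # ys))) = S' @ T"
        using Pyz w(2) ACT_cls[OF vT] loc q by simp
      have "blocks (S' @ T) = 1 + blocks T"
        by (rule blocks_app[OF S'ne _ Tne, of False]) (use aS' hT in \<open>auto simp: allB_def\<close>)
      thus ?thesis using res bT S'ne aS' yA by (cases S') (auto simp: allB_def)
    qed
  qed
qed

end

lemma startok_app: "T \<noteq> [] \<Longrightarrow> startok (T @ U) = startok T"
  by (cases T rule: startok.cases) auto

lemma adj_switch: "adj x y \<Longrightarrow> isAD x \<noteq> isAD y \<Longrightarrow> startok (y # Z)"
  by (cases x; cases y) auto

lemma blocks_allside: "allA S \<or> allB S \<Longrightarrow> blocks S \<le> 1"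
  using blocks_uniform[of S] by (cases S) auto

context nfs
begin

interpretation grp: group GG by (rule grp)

lemma altP_Nil: "altP []" by (simp add: altP_def)

lemma EX: "valid m n N (i, j, S) \<Longrightarrow> S \<noteq> [] \<Longrightarrow> \<exists>ys. altP ys \<and> ys \<noteq> [] \<and> length ys = blocks S \<and>
    list_prod GG ys = PsiG (i, j, S) \<and> (hd ys \<in> AA \<longleftrightarrow> isAD (hd S))"
proof (induction "length S" arbitrary: i j S rule: less_induct)
  case less
  define b where "b = isAD (hd S)"
  define T where "T = takeWhile (\<lambda>s. isAD s = b) S"
  define U where "U = dropWhile (\<lambda>s. isAD s = b) S"
  have SU: "S = T @ U" by (simp add: T_def U_def)
  have Tne: "T \<noteq> []" using less.prems(2) by (cases S) (auto simp: T_def b_def)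
  have Tside: "\<forall>s\<in>set T. isAD s = b" by (auto simp: T_def dest: set_takeWhileD)
  have hdT: "hd T = hd S" using SU Tne by simp
  have Uhd: "U \<noteq> [] \<Longrightarrow> isAD (hd U) \<noteq> b" unfolding U_def using hd_dropWhile by blast
  have vS: "md N i = i" "md N j = j" "vlist m n N (T @ U)" "startok (T @ U)" using less.prems(1) SU by auto
  have vT: "valid m n N (i, j, T)"
    using vS startok_app[OF Tne] by (auto simp: vlist_def successively_append_iff)
  define y1 where "y1 = PsiG (i, j, T)"
  have y1c: "y1 \<in> carrier GG" by (simp add: y1_def)
  have Py1: "Phi y1 = (i, j, T)" unfolding y1_def by (rule Phi_Psi[OF vT])
  have y1H: "y1 \<notin> HH" using HH_iff[OF y1c] Py1 Tne by simp
  have y1AB: "y1 \<in> AA \<union> BB"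
  proof (cases b)
    case True thus ?thesis using Tside Psi_in_AA[of T i j] by (auto simp: y1_def allA_def)
  next
    case False thus ?thesis using Tside Psi_in_BB[of T i j] by (auto simp: y1_def allB_def)
  qed
  have y1A: "y1 \<in> AA \<longleftrightarrow> b"
  proof (cases b)
    case True thus ?thesis using Tside Psi_in_AA[of T i j] by (auto simp: y1_def allA_def)
  next
    case False
    have "\<not> allA T" using Tside Tne False by (cases T) (auto simp: allA_def)
    thus ?thesis using AA_iff[OF y1c] Py1 False by simp
  qed
  show ?case
  proof (cases "U = []")
    case True
    have "blocks S = 1" using blocks_uniform[of S] Tside True SU Tne
      by (cases b) (auto simp: allA_def allB_def)
    moreover have "altP [y1]" using altP_Cons[of y1 "[]"] altP_Nil y1H y1AB by simp
    ultimately show ?thesis using True SU y1c y1A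
      by (intro exI[of _ "[y1]"]) (auto simp: y1_def b_def)
  next
    case False
    have adjTU: "adj (last T) (hd U)" using vS(3) Tne False
      by (auto simp: vlist_def successively_append_iff)
    have "isAD (last T) = b" using Tside Tne by simp
    hence stU: "startok U" using adj_switch[OF adjTU] Uhd[OF False] False
      by (cases U) auto
    have vU: "valid m n N (0, 0, U)" using vS stU by (auto simp: vlist_def successively_append_iff)
    have lenU: "length U < length S" using SU Tne by simp
    obtain ys' where ys': "altP ys'" "ys' \<noteq> []" "length ys' = blocks U"
      "list_prod GG ys' = PsiG (0, 0, U)" "hd ys' \<in> AA \<longleftrightarrow> isAD (hd U)"
      using less.hyps[OF lenU vU False] by blast
    have hdys': "hd ys' \<in> (AA \<union> BB) - HH" using ys'(1,2) by (auto simp: altP_def)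
    have alt: "\<not> (y1 \<in> AA \<and> hd ys' \<in> AA) \<and> \<not> (y1 \<in> BB \<and> hd ys' \<in> BB)"
      using y1A ys'(5) Uhd[OF False] AB_HH y1H hdys' by blast
    have altP: "altP (y1 # ys')" using altP_Cons[of y1 ys'] ys'(1) y1H y1AB alt by simp
    have "blocks S = 1 + blocks U"
      unfolding SU by (rule blocks_app[OF Tne Tside False Uhd[OF False]])
    moreover have "list_prod GG (y1 # ys') = PsiG (i, j, S)"
      using ys'(4) SU by (simp add: y1_def grp.PsiS_append grp.m_assoc)
    ultimately show ?thesis using altP ys' y1A hdT
      by (intro exI[of _ "y1 # ys'"]) (auto simp: b_def)
  qed
qed

lemma red_iff: "length ys > 1 \<Longrightarrow> reduced_form GG AA BB HH ys \<longleftrightarrow> altP ys"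
  unfolding reduced_form_def altP_def by auto

lemma red1: "reduced_form GG AA BB HH [y] \<longleftrightarrow> y \<in> AA \<union> BB"
  unfolding reduced_form_def by auto

lemma amal_formula:
  assumes xc: "x \<in> carrier GG"
  shows "amal_length GG AA BB HH x = max 1 (blocks (Sof (Phi x)))"
proof -
  define L where "L = max 1 (blocks (Sof (Phi x)))"
  have ex: "\<exists>ys. reduced_form GG AA BB HH ys \<and> length ys = L \<and> list_prod GG ys = x"
  proof (cases "blocks (Sof (Phi x)) \<le> 1")
    case True
    hence "allA (Sof (Phi x)) \<or> allB (Sof (Phi x))" by (rule blocks_le1)
    hence "x \<in> AA \<union> BB" using AA_iff[OF xc] BB_iff[OF xc] by auto
    thus ?thesis using True xc red1 by (intro exI[of _ "[x]"]) (auto simp: L_def)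
  next
    case False
    obtain i j S where P: "Phi x = (i, j, S)" by (cases "Phi x") auto
    have v: "valid m n N (i, j, S)" using Phi_valid[OF xc] P by simp
    have Sne: "S \<noteq> []" using False P by auto
    obtain ys where ys: "altP ys" "ys \<noteq> []" "length ys = blocks S" "list_prod GG ys = PsiG (i, j, S)"
      using EX[OF v Sne] by blast
    have "PsiG (i, j, S) = x" using Psi_Phi[OF xc] P by simp
    thus ?thesis using ys red_iff[of ys] False P by (intro exI[of _ ys]) (auto simp: L_def)
  qed
  have all: "length ys = L" if r: "reduced_form GG AA BB HH ys" and p: "list_prod GG ys = x" for ys
  proof (cases "length ys > 1")
    case True
    hence "altP ys" using red_iff r by simp
    moreover have "ys \<noteq> []" using True by auto
    ultimately have "blocks (Sof (Phi x)) = length ys" using BC p by blast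
    thus ?thesis using True by (simp add: L_def)
  next
    case False
    then obtain y where ys: "ys = [y]" using r unfolding reduced_form_def
      by (cases ys) auto
    hence yAB: "y \<in> AA \<union> BB" using r red1 by simp
    hence "y \<in> carrier GG" using AA_carrier BB_carrier by auto
    hence "x = y" using p ys by simp
    hence "allA (Sof (Phi x)) \<or> allB (Sof (Phi x))" using yAB AA_Phi BB_Phi by auto
    hence "blocks (Sof (Phi x)) \<le> 1" by (rule blocks_allside)
    thus ?thesis using ys by (simp add: L_def)
  qed
  have "amal_length GG AA BB HH x = L"
    unfolding amal_length_def
  proof (rule Least_equality)
    show "\<exists>xs. reduced_form GG AA BB HH xs \<and> length xs = L \<and> list_prod GG xs = x" by (rule ex)
  next
    fix r assume "\<exists>xs. reduced_form GG AA BB HH xs \<and> length xs = r \<and> list_prod GG xs = x"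
    thus "L \<le> r" using all by auto
  qed
  thus ?thesis by (simp add: L_def)
qed

end

fun redsyl :: "nat \<Rightarrow> syl \<Rightarrow> syl" where
  "redsyl t (SC e) = SC (md t e)" | "redsyl t (SD e) = SD (md t e)" | "redsyl t s = s"

fun red :: "nat \<Rightarrow> nf \<Rightarrow> nf" where
  "red t (i, j, S) = (md t i, md t j, map (redsyl t) S)"

fun sylbnd :: "syl \<Rightarrow> nat" where
  "sylbnd (SC e) = nat \<bar>e\<bar>" | "sylbnd (SD e) = nat \<bar>e\<bar>" | "sylbnd _ = 0"

definition bnd :: "syl list \<Rightarrow> nat" where "bnd S = sum_list (map sylbnd S)"

lemma sylbnd_le: "s \<in> set S \<Longrightarrow> sylbnd s \<le> bnd S"
  by (induction S) (auto simp: bnd_def)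

lemma isAD_redsyl[simp]: "isAD (redsyl t s) = isAD s" by (cases s) auto
lemma adj_redsyl[simp]: "adj (redsyl t x) (redsyl t y) = adj x y" by (cases x; cases y) auto
lemma startok_redsyl[simp]: "startok (map (redsyl t) S) = startok S"
  by (cases S rule: startok.cases) auto

lemma blocks_redsyl[simp]: "blocks (map (redsyl t) S) = blocks S"
  by (induction S rule: blocks.induct) auto

lemma md_nonzero:
  fixes e :: int assumes "e \<noteq> 0" "nat \<bar>e\<bar> < t" shows "md t e \<noteq> 0"
proof
  assume "md t e = 0"
  hence "int t dvd e" by (simp add: md_def dvd_eq_mod_eq_0)
  hence "\<bar>int t\<bar> \<le> \<bar>e\<bar>" using dvd_imp_le_int[OF assms(1)] by blast
  thus False using assms(2) by linarith
qed

lemma vsyl_red: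
  assumes "vsyl m n 0 s" "sylbnd s < t"
  shows "vsyl m n t (redsyl t s)"
  using assms md_nonzero by (cases s) auto

lemma vlist_red:
  assumes "vlist m n 0 S" "bnd S < t"
  shows "vlist m n t (map (redsyl t) S)"
proof -
  have "\<forall>s\<in>set S. vsyl m n t (redsyl t s)"
    using assms sylbnd_le vsyl_red unfolding vlist_def by (meson le_less_trans)
  moreover have "successively adj (map (redsyl t) S)"
    using assms(1) by (simp add: vlist_def successively_map)
  ultimately show ?thesis by (simp add: vlist_def)
qed

lemma valid_red:
  assumes "valid m n 0 p" "bnd (Sof p) < t"
  shows "valid m n t (red t p)"
  using assms vlist_red by (cases p) auto

context group
begin

lemma PsiS_red:
  assumes g: "g1 \<in> carrier G" "g2 \<in> carrier G"
    and N1: "N = 0 \<or> g1 [^] (int M1 * int N) = \<one>" and N2: "N = 0 \<or> g2 [^] (int M2 * int N) = \<one>"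
  shows "PsiS g1 g2 M1 M2 (map (redsyl N) S) = PsiS g1 g2 M1 M2 S"
proof (induction S)
  case (Cons s S)
  have "Psi1 g1 g2 M1 M2 (redsyl N s) = Psi1 g1 g2 M1 M2 s"
    using pow_md[OF g(1) N1] pow_md[OF g(2) N2] by (cases s) auto
  thus ?case using Cons by simp
qed simp

lemma Psi_red:
  assumes g: "g1 \<in> carrier G" "g2 \<in> carrier G"
    and N1: "N = 0 \<or> g1 [^] (int M1 * int N) = \<one>" and N2: "N = 0 \<or> g2 [^] (int M2 * int N) = \<one>"
  shows "Psi g1 g2 M1 M2 (red N p) = Psi g1 g2 M1 M2 p"
  using PsiS_red[OF assms] pow_md[OF g(1) N1] pow_md[OF g(2) N2] by (cases p) auto

end

lemma hom_PsiS:
  assumes "group_hom G H h" "g1 \<in> carrier G" "g2 \<in> carrier G"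
  shows "h (group.PsiS G g1 g2 M1 M2 S) = group.PsiS H (h g1) (h g2) M1 M2 S"
proof -
  interpret group_hom G H h by (rule assms(1))
  show ?thesis
  proof (induction S)
    case Nil thus ?case by (simp add: G.PsiS_simps H.PsiS_simps)
  next
    case (Cons s S)
    have "h (G.Psi1 g1 g2 M1 M2 s) = H.Psi1 (h g1) (h g2) M1 M2 s"
      using assms(2,3) by (cases s) (auto simp: hom_int_pow)
    thus ?case using Cons assms(2,3) by (simp add: G.PsiS_simps H.PsiS_simps)
  qed
qed

lemma hom_Psi:
  assumes "group_hom G H h" "g1 \<in> carrier G" "g2 \<in> carrier G"
  shows "h (group.Psi G g1 g2 M1 M2 p) = group.Psi H (h g1) (h g2) M1 M2 p"
proof -
  interpret group_hom G H h by (rule assms(1))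
  obtain i j S where p: "p = (i, j, S)" by (cases p) auto
  show ?thesis using hom_PsiS[OF assms] assms(2,3) by (simp add: p hom_int_pow)
qed

lemma weqv_mono: assumes "word_eqv R u v" "R \<subseteq> R'" shows "word_eqv R' u v"
  using assms
proof (induction rule: word_eqv.induct)
  case (cancel u x v) show ?case using word_eqv.cancel[of R' u x v] by simp
next
  case (relator r u v) thus ?case using word_eqv.relator[of r R' u v] by auto
qed (auto intro: word_eqv.intros)

lemma rho_cls: "rho m n t (word_cls (rels_G m n) w) = word_cls (rels_Gt m n t) w"
proof -
  have sub: "rels_G m n \<subseteq> rels_Gt m n t" by (auto simp: rels_Gt_def)
  show ?thesis unfolding rho_def word_cls_def
    using weqv_mono[OF _ sub] word_eqv.trans word_eqv.refl by blast
qed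


theorem proposition2p5:
  fixes m n :: nat and g :: "word set"
  assumes "m > 1" and "n > 1"
    and "g \<in> carrier (G_mn m n)"
  shows "\<exists>t0::nat. t0 > 1 \<and>
           (\<forall>t::nat. t > 0 \<and> t0 dvd t \<longrightarrow>
              amal_length (G_mnt m n t) (sub_A (rels_Gt m n t) m n) (sub_B (rels_Gt m n t) m n)
                 (sub_H (rels_Gt m n t) m n) (rho m n t g)
              = amal_length (G_mn m n) (sub_A (rels_G m n) m n) (sub_B (rels_G m n) m n)
                 (sub_H (rels_G m n) m n) g)"
proof -
  have mp: "0 < m" "0 < n" using assms(1,2) by auto
  interpret G0: nfs m n 0 by unfold_locales (use mp in auto)
  have R0: "relsN m n 0 = rels_G m n" by (simp add: relsN_def)
  have gc: "g \<in> carrier G0.GG" using assms(3) R0 by (simp add: G_mn_def)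
  obtain i j S where P: "G0.Phi g = (i, j, S)" by (cases "G0.Phi g") auto
  have v0: "valid m n 0 (i, j, S)" using G0.Phi_valid[OF gc] P by simp
  have gpsi: "G0.PsiG (i, j, S) = g" using G0.Psi_Phi[OF gc] P by simp
  have len0: "amal_length (G_mn m n) (sub_A (rels_G m n) m n) (sub_B (rels_G m n) m n)
                 (sub_H (rels_G m n) m n) g = max 1 (blocks S)"
    using G0.amal_formula[OF gc] P R0 by (simp add: G_mn_def)
  obtain w where w: "g = G0.cl w" using G0.carrier_cl[OF gc] by blast
  define t0 where "t0 = bnd S + 2"
  show ?thesis
  proof (intro exI[of _ t0] conjI allI impI)
    show "1 < t0" by (simp add: t0_def)
  next
    fix t :: nat assume t: "0 < t \<and> t0 dvd t"
    hence tle: "t0 \<le> t" by (simp add: dvd_imp_le)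
    hence bt: "bnd S < t" by (simp add: t0_def)
    interpret Gt: nfs m n t by unfold_locales (use mp in auto)
    have Rt: "relsN m n t = rels_Gt m n t" using t by (simp add: relsN_def)
    have rc: "rho m n t (G0.cl u) = Gt.cl u" for u using rho_cls[of m n t u] R0 Rt by simp
    have hom: "group_hom G0.GG Gt.GG (rho m n t)"
    proof (intro group_hom.intro group_hom_axioms.intro)
      show "group G0.GG" by (rule G0.grp)
      show "group Gt.GG" by (rule Gt.grp)
      show "rho m n t \<in> hom G0.GG Gt.GG"
      proof (rule homI)
        fix x assume "x \<in> carrier G0.GG"
        then obtain u where "x = G0.cl u" using G0.carrier_cl by blast
        thus "rho m n t x \<in> carrier Gt.GG" using rc by simp
      next
        fix x y assume "x \<in> carrier G0.GG" "y \<in> carrier G0.GG"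
        then obtain u v where "x = G0.cl u" "y = G0.cl v" using G0.carrier_cl by blast
        thus "rho m n t (x \<otimes>\<^bsub>G0.GG\<^esub> y) = rho m n t x \<otimes>\<^bsub>Gt.GG\<^esub> rho m n t y"
          using rc by (simp add: G0.cl_mult Gt.cl_mult)
      qed
    qed
    have ral: "rho m n t G0.al = Gt.al" using rc by (simp add: G0.al_def Gt.al_def)
    have rbe: "rho m n t G0.be = Gt.be" using rc by (simp add: G0.be_def Gt.be_def)
    have "rho m n t g = Gt.PsiG (i, j, S)"
      using hom_Psi[OF hom G0.al_carrier G0.be_carrier, of m n "(i, j, S)"] gpsi ral rbe by simp
    also have "\<dots> = Gt.PsiG (red t (i, j, S))"
      using group.Psi_red[OF Gt.grp Gt.al_carrier Gt.be_carrier Gt.al_mN Gt.be_nN, of "(i, j, S)"] by simp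
    finally have rg: "rho m n t g = Gt.PsiG (red t (i, j, S))" .
    have vt: "valid m n t (red t (i, j, S))" using valid_red[OF v0] bt by simp
    have Pt: "Gt.Phi (rho m n t g) = red t (i, j, S)" using Gt.Phi_Psi[OF vt] rg by simp
    have rgc: "rho m n t g \<in> carrier Gt.GG" using w rc by simp
    have "amal_length (G_mnt m n t) (sub_A (rels_Gt m n t) m n) (sub_B (rels_Gt m n t) m n)
                 (sub_H (rels_Gt m n t) m n) (rho m n t g) = max 1 (blocks S)"
      using Gt.amal_formula[OF rgc] Pt Rt by (simp add: G_mnt_def)
    thus "amal_length (G_mnt m n t) (sub_A (rels_Gt m n t) m n) (sub_B (rels_Gt m n t) m n)
                 (sub_H (rels_Gt m n t) m n) (rho m n t g)
              = amal_length (G_mn m n) (sub_A (rels_G m n) m n) (sub_B (rels_G m n) m n)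
                 (sub_H (rels_G m n) m n) g" using len0 by simp
  qed
qed

end
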